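(* Let $X,Y$ be real Hilbert spaces and $T:X\to Y$ a nonzero, injective, bounded linear operator. Let $x^\dagger\in X$, $y^\dagger:=Tx^\dagger$, $x_0\in X$, and $\alpha>0$. Set $x_{\alpha,0}:=x_0$ and, for integers $k\ge1$, let $x_{\alpha,k}$ be the unique minimizer over $x\in X$ of $\|y^\dagger-Tx\|^2+\alpha\|x-x_{\alpha,k-1}\|^2$ (stationary iterated Tikhonov regularization). Let $k\ge1$ be an integer and $0\le\nu\le k$ real. Then $$N_{\nu/k}^{1-2k}\|x^\dagger-x_0\|_{\nu:k}\le\sup_{\alpha>0}\alpha^{-\nu}\|x^\dagger-x_{\alpha,k}\|\le\|x^\dagger-x_0\|_{\nu:k}.$$ If $\nu=k$, then $\sup_{\alpha>0}$ can be replaced by $\lim_{\alpha\searrow0}$.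
   Context: For $\gamma>0$, $X_\gamma:=\mathrm{range}((T^*T)^\gamma)$ with norm $\|x\|_\gamma:=\|(T^*T)^{-\gamma}x\|$. For $x\in X$ and $t>0$, $K^\gamma_t(x):=\inf_{x_1\in X_\gamma}\big(\|x-x_1\|^2+t^2\|x_1\|_\gamma^2\big)^{1/2}$, and for $0\le\nu\le\gamma$, $\|x\|_{\nu:\gamma}:=\sup_{t>0}t^{-\nu/\gamma}K^\gamma_t(x)\in[0,\infty]$. For $0<\theta<1$, $N_\theta:=\big(\theta^\theta(1-\theta)^{1-\theta}\big)^{-1/2}$, and $N_0:=N_1:=1$. *)

theory Defs
  imports "HOL-Analysis.Analysis" "HOL-Computational_Algebra.Polynomial"
begin

text \<open>Real Hilbert spaces are modelled by the type class combination
  real_inner + complete_space.\<close>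

text \<open>Hilbert-space adjoint of a bounded linear operator T (exists by Riesz).\<close>
definition adj :: "('a::real_inner \<Rightarrow> 'b::real_inner) \<Rightarrow> 'b \<Rightarrow> 'a" where
  "adj T y = (THE x. \<forall>z. inner (T z) y = inner z x)"

definition poly_op :: "real poly \<Rightarrow> ('a::real_vector \<Rightarrow> 'a) \<Rightarrow> 'a \<Rightarrow> 'a" where
  "poly_op p A x = (\<Sum>i\<le>degree p. coeff p i *\<^sub>R (A ^^ i) x)"

text \<open>Continuous functional calculus for a positive self-adjoint bounded operator A:
  f(A) x is the limit of p(A) x as the polynomials p converge to f uniformly on
  [0, norm A] (which contains the spectrum of A).\<close>
definition fcalc :: "('a::real_normed_vector \<Rightarrow> 'a) \<Rightarrow> (real \<Rightarrow> real) \<Rightarrow> 'a \<Rightarrow> 'a" where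
  "fcalc A f x = (THE y. \<forall>\<epsilon>>0. \<exists>\<delta>>0. \<forall>p.
      (\<forall>t\<in>{0..onorm A}. \<bar>poly p t - f t\<bar> < \<delta>) \<longrightarrow> norm (poly_op p A x - y) < \<epsilon>)"

definition TTpow :: "('a::real_inner \<Rightarrow> 'b::real_inner) \<Rightarrow> real \<Rightarrow> 'a \<Rightarrow> 'a" where
  "TTpow T \<gamma> = fcalc (adj T \<circ> T) (\<lambda>t. t powr \<gamma>)"

definition Xspace :: "('a::real_inner \<Rightarrow> 'b::real_inner) \<Rightarrow> real \<Rightarrow> 'a set" where
  "Xspace T \<gamma> = range (TTpow T \<gamma>)"

text \<open>norm_\<gamma> x = norm ((T^*T)^(-\<gamma>) x) for x in X_\<gamma> (preimage is unique as T is injective)\<close>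
definition gnorm :: "('a::real_inner \<Rightarrow> 'b::real_inner) \<Rightarrow> real \<Rightarrow> 'a \<Rightarrow> real" where
  "gnorm T \<gamma> x = norm (THE z. TTpow T \<gamma> z = x)"

definition Kfun :: "('a::real_inner \<Rightarrow> 'b::real_inner) \<Rightarrow> real \<Rightarrow> real \<Rightarrow> 'a \<Rightarrow> real" where
  "Kfun T \<gamma> t x = Inf ((\<lambda>x1. sqrt ((norm (x - x1))\<^sup>2 + t\<^sup>2 * (gnorm T \<gamma> x1)\<^sup>2)) ` Xspace T \<gamma>)"

definition interp_norm :: "('a::real_inner \<Rightarrow> 'b::real_inner) \<Rightarrow> real \<Rightarrow> real \<Rightarrow> 'a \<Rightarrow> ereal" where
  "interp_norm T \<nu> \<gamma> x = (SUP t\<in>{0<..}. ereal (t powr (-\<nu>/\<gamma>) * Kfun T \<gamma> t x))"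

definition Nconst :: "real \<Rightarrow> real" where
  "Nconst \<theta> = (if 0 < \<theta> \<and> \<theta> < 1 then (\<theta> powr \<theta> * (1-\<theta>) powr (1-\<theta>)) powr (-1/2) else 1)"

fun tikh :: "('a::real_inner \<Rightarrow> 'b::real_inner) \<Rightarrow> 'b \<Rightarrow> 'a \<Rightarrow> real \<Rightarrow> nat \<Rightarrow> 'a" where
  "tikh T y x0 \<alpha> 0 = x0"
| "tikh T y x0 \<alpha> (Suc k) = (THE x. \<forall>z.
      (norm (y - T x))\<^sup>2 + \<alpha> * (norm (x - tikh T y x0 \<alpha> k))\<^sup>2
      \<le> (norm (y - T z))\<^sup>2 + \<alpha> * (norm (z - tikh T y x0 \<alpha> k))\<^sup>2)"

end

theory Submission
  imports Defs "HOL-Computational_Algebra.Fundamental_Theorem_Algebra"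
begin
lemma quad_zero:
  fixes b c :: real
  assumes "\<And>s. s * b + s\<^sup>2 * c \<ge> 0"
  shows "b = 0"
proof (rule ccontr)
  assume b: "b \<noteq> 0"
  have c: "c \<ge> 0" using assms[of 1] assms[of "-1"] by (simp add: power2_eq_square)
  define s where "s = - b / (c + 1)"
  have c1: "c + 1 \<noteq> 0" using c by simp
  have e1: "b + s * c = b / (c + 1)" using c1 unfolding s_def by (simp add: field_simps)
  have "s * b + s\<^sup>2 * c = s * (b + s * c)" by (simp add: power2_eq_square algebra_simps)
  also have "\<dots> = s * (b / (c + 1))" by (simp only: e1)
  also have "\<dots> = - (b * b) / ((c+1) * (c+1))" unfolding s_def by simp
  also have "\<dots> < 0" proof -
    have "0 < b * b" using b not_real_square_gt_zero by blast
    moreover have "0 < (c+1)*(c+1)" using c by (simp add: add_nonneg_pos)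
    ultimately show ?thesis by simp
  qed
  finally show False using assms[of s] by linarith
qed

lemma min_exists:
  fixes J :: "'a::{real_inner,complete_space} \<Rightarrow> real"
  assumes cont: "continuous_on UNIV J" and lb: "\<And>x. J x \<ge> m0"
    and c: "c > 0"
    and mid: "\<And>x z. c * (norm (x - z))\<^sup>2 \<le> J x + J z - 2 * J ((1/2) *\<^sub>R (x + z))"
  shows "\<exists>x. \<forall>z. J x \<le> J z"
proof -
  define m where "m = Inf (range J)"
  have bdd: "bdd_below (range J)" using lb by (meson bdd_belowI2)
  have mle: "m \<le> J x" for x unfolding m_def using bdd by (simp add: cInf_lower)
  have "\<exists>x. J x < m + 1 / (real n + 1)" for n
  proof -
    have "Inf (range J) < m + 1 / (real n + 1)" unfolding m_def by simp
    then show ?thesis using cInf_lessD[of "range J"] by blast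
  qed
  then obtain X where X: "\<And>n. J (X n) < m + 1 / (real n + 1)" by (metis choice)
  have Jl: "(\<lambda>n. J (X n)) \<longlonglongrightarrow> m"
  proof (rule tendsto_sandwich[of "\<lambda>n. m" _ _ "\<lambda>n. m + 1 / (real n + 1)"])
    show "\<forall>\<^sub>F n in sequentially. m \<le> J (X n)" using mle by (intro always_eventually allI)
    show "\<forall>\<^sub>F n in sequentially. J (X n) \<le> m + 1 / (real n + 1)" using X less_imp_le by (intro always_eventually allI) blast
    show "(\<lambda>n. m + 1 / (real n + 1)) \<longlonglongrightarrow> m"
      using tendsto_add[OF tendsto_const LIMSEQ_inverse_real_of_nat] by (simp add: inverse_eq_divide add.commute)
  qed simp
  have "Cauchy X"
  proof (rule metric_CauchyI)
    fix e :: real assume e: "e > 0"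
    obtain N :: nat where N: "1 / (real N + 1) < c * e\<^sup>2 / 2"
    proof -
      have "c * e\<^sup>2 / 2 > 0" using c e by simp
      then obtain N :: nat where "inverse (real (Suc N)) < c * e\<^sup>2 / 2" using reals_Archimedean by blast
      then show ?thesis using that[of N] by (simp add: inverse_eq_divide add.commute)
    qed
    show "\<exists>M. \<forall>p\<ge>M. \<forall>n\<ge>M. dist (X p) (X n) < e"
    proof (intro exI allI impI)
      fix p n assume p: "p \<ge> N" and n: "n \<ge> N"
      have h: "1 / (real p + 1) \<le> 1 / (real N + 1)" "1 / (real n + 1) \<le> 1 / (real N + 1)"
        using p n by (auto intro!: divide_left_mono)
      have "c * (norm (X p - X n))\<^sup>2 \<le> J (X p) + J (X n) - 2 * m"
        using mid[of "X p" "X n"] mle[of "(1/2) *\<^sub>R (X p + X n)"] by linarith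
      also have "\<dots> < c * e\<^sup>2" using X[of p] X[of n] h N by linarith
      finally have "(norm (X p - X n))\<^sup>2 < e\<^sup>2" using c by simp
      then have "norm (X p - X n) < e" using e power_less_imp_less_base[of "norm (X p - X n)" 2 e] by simp
      then show "dist (X p) (X n) < e" by (simp add: dist_norm)
    qed
  qed
  then obtain l where l: "X \<longlonglongrightarrow> l" using convergent_eq_Cauchy by blast
  have "(\<lambda>n. J (X n)) \<longlonglongrightarrow> J l"
    using continuous_on_tendsto_compose[OF cont l] by simp
  then have "J l = m" using Jl LIMSEQ_unique by blast
  then show ?thesis using mle by auto
qed

lemma inner_ext: fixes x y :: "'a::real_inner"
  assumes "\<And>w. inner x w = inner y w" shows "x = y"
proof -
  have "inner (x - y) (x - y) = 0" using assms[of "x-y"] by (simp add: inner_diff_left)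
  then show ?thesis by simp
qed

lemma par_mid: fixes x z :: "'a::real_inner"
  shows "(norm (x - z))\<^sup>2 = 2 * (norm x)\<^sup>2 + 2 * (norm z)\<^sup>2 - 4 * (norm ((1/2) *\<^sub>R (x + z)))\<^sup>2"
  by (simp add: power2_norm_eq_inner inner_add_left inner_add_right inner_diff_left
      inner_diff_right inner_commute algebra_simps)

lemma norm_add_sq: fixes x y :: "'a::real_inner"
  shows "(norm (x + y))\<^sup>2 = (norm x)\<^sup>2 + 2 * inner x y + (norm y)\<^sup>2"
  by (simp add: power2_norm_eq_inner inner_add_left inner_add_right inner_commute)

lemma norm_diff_sq: fixes x y :: "'a::real_inner"
  shows "(norm (x - y))\<^sup>2 = (norm x)\<^sup>2 - 2 * inner x y + (norm y)\<^sup>2"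
  by (simp add: power2_norm_eq_inner inner_diff_left inner_diff_right inner_commute)

locale hs =
  fixes T :: "'a::{real_inner,complete_space} \<Rightarrow> 'b::{real_inner,complete_space}"
  assumes bl: "bounded_linear T" and injT: "inj T"
begin

lemma T_lin: "T (x + y) = T x + T y" "T (c *\<^sub>R x) = c *\<^sub>R T x" "T (x - y) = T x - T y" "T 0 = 0"
  using bounded_linear.linear[OF bl] by (auto simp: linear_add linear_scale linear_diff linear_0)

lemma adj_exists: "\<exists>x. \<forall>z. inner (T z) y = inner z x"
proof -
  obtain K where K: "K > 0" "\<And>x. norm (T x) \<le> norm x * K" using bounded_linear.pos_bounded[OF bl] by blast
  define J where "J x = (norm x)\<^sup>2 - 2 * inner (T x) y" for x
  have cont: "continuous_on UNIV J" unfolding J_def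
    by (intro continuous_intros bounded_linear.continuous_on[OF bl])
  have lb: "J x \<ge> - (K * norm y)\<^sup>2" for x
  proof -
    have "inner (T x) y \<le> norm (T x) * norm y" by (rule norm_cauchy_schwarz)
    also have "\<dots> \<le> norm x * K * norm y" using K(2)[of x] by (simp add: mult_right_mono)
    finally have "J x \<ge> (norm x)\<^sup>2 - 2 * (norm x * K * norm y)" unfolding J_def by simp
    moreover have "(norm x)\<^sup>2 - 2 * (norm x * K * norm y) + (K * norm y)\<^sup>2 \<ge> 0"
      using zero_le_power2[of "norm x - K * norm y"] by (simp add: power2_eq_square algebra_simps)
    ultimately show ?thesis by linarith
  qed
  have mid: "(1/2) * (norm (x - z))\<^sup>2 \<le> J x + J z - 2 * J ((1/2) *\<^sub>R (x + z))" for x z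
    unfolding J_def using par_mid[of x z] by (simp add: T_lin inner_add_left) (simp add: field_simps)
  obtain x where x: "\<And>z. J x \<le> J z" using min_exists[OF cont lb _ mid] by auto
  have "inner (T z) y = inner z x" for z
  proof -
    have "s * (2 * inner z x - 2 * inner (T z) y) + s\<^sup>2 * (norm z)\<^sup>2 \<ge> 0" for s
    proof -
      have "J (x + s *\<^sub>R z) = J x + (s * (2 * inner z x - 2 * inner (T z) y) + s\<^sup>2 * (norm z)\<^sup>2)"
        unfolding J_def by (simp add: T_lin norm_add_sq inner_add_left power_mult_distrib
            inner_commute algebra_simps)
      then show ?thesis using x[of "x + s *\<^sub>R z"] by linarith
    qed
    then have "2 * inner z x - 2 * inner (T z) y = 0" by (rule quad_zero[where c="(norm z)\<^sup>2"])
    then show ?thesis by simp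
  qed
  then show ?thesis by blast
qed

lemma adj_char: "inner (T z) y = inner z (adj T y)"
proof -
  obtain x where x: "\<forall>z. inner (T z) y = inner z x" using adj_exists by blast
  have "adj T y = x" unfolding adj_def
  proof (rule the_equality)
    show "\<forall>z. inner (T z) y = inner z x" by (rule x)
    fix x' assume "\<forall>z. inner (T z) y = inner z x'"
    then have "inner x' w = inner x w" for w using x by (metis inner_commute)
    then show "x' = x" by (rule inner_ext)
  qed
  then show ?thesis using x by simp
qed

definition A :: "'a \<Rightarrow> 'a" where "A = adj T \<circ> T"

lemma A_inner: "inner (A u) v = inner (T u) (T v)"
  using adj_char[of v "T u"] by (simp add: A_def inner_commute)

lemma A_sym: "inner (A u) v = inner u (A v)"
  by (metis A_inner inner_commute)

lemma A_pos: "inner (A u) u \<ge> 0"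
  by (simp add: A_inner)

lemma A_add: "A (u + v) = A u + A v"
  by (rule inner_ext) (simp add: A_inner T_lin inner_add_left)

lemma A_scale: "A (c *\<^sub>R u) = c *\<^sub>R A u"
  by (rule inner_ext) (simp add: A_inner T_lin)

lemma A_bl: "bounded_linear A"
proof -
  obtain K where K: "K > 0" "\<And>x. norm (T x) \<le> norm x * K" using bounded_linear.pos_bounded[OF bl] by blast
  have "norm (A u) \<le> norm u * (K * K)" for u
  proof -
    have "(norm (A u))\<^sup>2 = inner (T u) (T (A u))" by (simp add: power2_norm_eq_inner A_inner)
    also have "\<dots> \<le> norm (T u) * norm (T (A u))" by (rule norm_cauchy_schwarz)
    also have "\<dots> \<le> (norm u * K) * (norm (A u) * K)"
      using K by (intro mult_mono) auto
    finally have "norm (A u) * norm (A u) \<le> norm (A u) * (norm u * (K * K))"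
      by (simp add: power2_eq_square algebra_simps)
    then show ?thesis
      by (cases "norm (A u) = 0") (auto simp: mult_le_cancel_left)
  qed
  then show ?thesis
    by (intro bounded_linear_intro[where K="K*K"]) (auto simp: A_add A_scale)
qed

lemma A_inj: "A u = 0 \<Longrightarrow> u = 0"
proof -
  assume "A u = 0"
  then have "inner (T u) (T u) = 0" by (metis A_inner inner_zero_left)
  then have "T u = 0" by simp
  then show "u = 0" using injT T_lin(4) by (metis injD)
qed

definition a :: real where "a = onorm A"

lemma a_nonneg: "a \<ge> 0" unfolding a_def by (rule onorm_pos_le[OF A_bl])

lemma A_norm: "norm (A u) \<le> a * norm u" unfolding a_def by (rule onorm[OF A_bl])

lemma A_upper: "inner (A u) u \<le> a * (norm u)\<^sup>2"
proof -
  have "inner (A u) u \<le> norm (A u) * norm u" by (rule norm_cauchy_schwarz)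
  also have "\<dots> \<le> a * norm u * norm u" using A_norm by (simp add: mult_right_mono)
  finally show ?thesis by (simp add: power2_eq_square)
qed

end

lemma poly_op_bound:
  assumes "degree p \<le> n"
  shows "poly_op p B x = (\<Sum>i\<le>n. coeff p i *\<^sub>R (B ^^ i) x)"
  unfolding poly_op_def
  by (rule sum.mono_neutral_left) (use assms in \<open>auto simp: coeff_eq_0\<close>)

lemma poly_op_add: "poly_op (p + q) B x = poly_op p B x + poly_op q B x"
proof -
  define n where "n = max (degree p) (degree q)"
  have "degree (p + q) \<le> n" unfolding n_def by (rule degree_add_le_max)
  then show ?thesis
    by (simp add: poly_op_bound[of _ n] n_def scaleR_add_left sum.distrib)
qed

lemma poly_op_smult: "poly_op (smult c p) B x = c *\<^sub>R poly_op p B x"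
proof -
  have "degree (smult c p) \<le> degree p" by simp
  then show ?thesis
    by (simp add: poly_op_bound[of _ "degree p"] scaleR_sum_right)
qed

lemma poly_op_zero[simp]: "poly_op 0 B x = 0"
  by (simp add: poly_op_def)

lemma poly_op_const: "poly_op [:c:] B x = c *\<^sub>R x"
  by (simp add: poly_op_def)

lemma poly_op_minus: "poly_op (- p) B x = - poly_op p B x"
  using poly_op_smult[of "-1" p B x] by simp

lemma poly_op_diff: "poly_op (p - q) B x = poly_op p B x - poly_op q B x"
  using poly_op_add[of p "-q" B x] poly_op_minus[of q B x] by simp

lemma poly_op_pCons0:
  assumes B: "linear B"
  shows "poly_op (pCons 0 p) B x = B (poly_op p B x)"
proof -
  have "degree (pCons 0 p) \<le> Suc (degree p)" by (simp add: degree_pCons_le)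
  then have "poly_op (pCons 0 p) B x = (\<Sum>i\<le>Suc (degree p). coeff (pCons 0 p) i *\<^sub>R (B ^^ i) x)"
    by (rule poly_op_bound)
  also have "\<dots> = (\<Sum>i\<le>degree p. coeff p i *\<^sub>R (B ^^ Suc i) x)"
    by (subst sum.atMost_Suc_shift) simp
  also have "\<dots> = B (\<Sum>i\<le>degree p. coeff p i *\<^sub>R (B ^^ i) x)"
    by (simp add: linear_sum[OF B] linear_scale[OF B])
  finally show ?thesis by (simp add: poly_op_def)
qed

lemma pCons_split: "pCons c p = [:c:] + pCons 0 p"
  by simp

lemma poly_op_pCons:
  assumes B: "linear B"
  shows "poly_op (pCons c p) B x = c *\<^sub>R x + B (poly_op p B x)"
proof -
  have "poly_op (pCons c p) B x = poly_op ([:c:] + pCons 0 p) B x" by simp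
  then show ?thesis by (simp only: poly_op_add poly_op_const poly_op_pCons0[OF B])
qed

lemma poly_op_mult:
  assumes B: "linear B"
  shows "poly_op (p * q) B x = poly_op p B (poly_op q B x)"
proof (induction p arbitrary: x)
  case 0 then show ?case by simp
next
  case (pCons c p)
  have "poly_op (pCons c p * q) B x = poly_op (smult c q + pCons 0 (p * q)) B x" by simp
  also have "\<dots> = c *\<^sub>R poly_op q B x + B (poly_op p B (poly_op q B x))"
    by (simp add: poly_op_add poly_op_smult poly_op_pCons0[OF B] pCons.IH)
  also have "\<dots> = poly_op (pCons c p) B (poly_op q B x)" by (simp add: poly_op_pCons[OF B])
  finally show ?case .
qed

lemma poly_op_linear:
  assumes B: "linear B"
  shows "poly_op p B (x + y) = poly_op p B x + poly_op p B y"
        "poly_op p B (r *\<^sub>R x) = r *\<^sub>R poly_op p B x"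
proof -
  show "poly_op p B (x + y) = poly_op p B x + poly_op p B y"
  proof (induction p)
    case 0 then show ?case by simp
  next
    case (pCons c p) then show ?case
      by (simp add: poly_op_pCons[OF B] linear_add[OF B] scaleR_add_right algebra_simps)
  qed
  show "poly_op p B (r *\<^sub>R x) = r *\<^sub>R poly_op p B x"
  proof (induction p)
    case 0 then show ?case by simp
  next
    case (pCons c p) then show ?case
      by (simp add: poly_op_pCons[OF B] linear_scale[OF B] scaleR_add_right algebra_simps)
  qed
qed

lemma poly_op_bl:
  assumes B: "bounded_linear B"
  shows "bounded_linear (poly_op p B)"
proof -
  have L: "linear B" using B bounded_linear.linear by blast
  obtain K where K: "\<And>x. norm (B x) \<le> norm x * K" and K0: "K > 0"
    using bounded_linear.pos_bounded[OF B] by blast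
  have "\<exists>M. \<forall>x. norm (poly_op p B x) \<le> norm x * M"
  proof (induction p)
    case 0 then show ?case by (intro exI[of _ 0]) simp
  next
    case (pCons c p)
    then obtain M where M: "\<And>x. norm (poly_op p B x) \<le> norm x * M" by blast
    have "norm (poly_op (pCons c p) B x) \<le> norm x * (\<bar>c\<bar> + M * K)" for x
    proof -
      have "norm (poly_op (pCons c p) B x) \<le> norm (c *\<^sub>R x) + norm (B (poly_op p B x))"
        by (metis poly_op_pCons[OF L] norm_triangle_ineq)
      also have "norm (B (poly_op p B x)) \<le> norm x * (M * K)"
      proof -
        have "norm (B (poly_op p B x)) \<le> norm (poly_op p B x) * K" by (rule K)
        also have "\<dots> \<le> norm x * M * K"
        proof (rule mult_right_mono[OF M])
          show "0 \<le> K" using K0 by simp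
        qed
        finally show ?thesis by simp
      qed
      finally show ?thesis by (simp add: algebra_simps)
    qed
    then show ?case by blast
  qed
  then obtain M where "\<And>x. norm (poly_op p B x) \<le> norm x * M" by blast
  then show ?thesis
    by (intro bounded_linear_intro[where K=M]) (auto simp: poly_op_linear[OF L])
qed

lemma poly_op_X: "poly_op [:0, 1:] B x = B x"
  by (simp add: poly_op_def)

lemma poly_op_monom:
  assumes B: "linear B"
  shows "poly_op (monom 1 k) B x = (B ^^ k) x"
proof (induction k arbitrary: x)
  case 0 then show ?case by (simp add: poly_op_def)
next
  case (Suc k)
  have "monom (1::real) (Suc k) = pCons 0 (monom 1 k)" by (simp add: monom_Suc)
  then show ?case by (simp add: poly_op_pCons0[OF B] Suc funpow_swap1)
qed

lemma poly_op_comm: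
  assumes B: "linear B"
  shows "poly_op p B (poly_op q B x) = poly_op q B (poly_op p B x)"
proof -
  have "poly_op p B (poly_op q B x) = poly_op (p * q) B x" by (rule poly_op_mult[OF B, symmetric])
  also have "\<dots> = poly_op (q * p) B x" by (simp only: mult.commute)
  also have "\<dots> = poly_op q B (poly_op p B x)" by (rule poly_op_mult[OF B])
  finally show ?thesis .
qed

lemma poly_op_commB:
  assumes B: "linear B"
  shows "poly_op p B (B x) = B (poly_op p B x)"
  using poly_op_comm[OF B, of p "[:0,1:]" x] by (simp add: poly_op_X)

context hs
begin

lemma A_lin: "linear A" using A_bl bounded_linear.linear by blast

lemma PA_sym: "inner (poly_op p A x) y = inner x (poly_op p A y)"
proof (induction p arbitrary: x y)
  case 0 then show ?case by simp
next
  case (pCons c p) then show ?case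
    by (simp add: poly_op_pCons[OF A_lin] inner_add_left inner_add_right A_sym poly_op_commB[OF A_lin])
qed

lemma PA_inner: "inner (poly_op p A x) (poly_op q A y) = inner (poly_op (q * p) A x) y"
  using PA_sym[of q "poly_op p A x" y] poly_op_mult[OF A_lin, of q p x] by simp

lemma PA_normsq: "(norm (poly_op p A x))\<^sup>2 = inner (poly_op (p * p) A x) x"
  using PA_inner[of p x p x] by (simp add: power2_norm_eq_inner)

end

definition bb :: "('a::real_normed_vector \<Rightarrow> 'a) \<Rightarrow> bool" where
  "bb B \<longleftrightarrow> (\<exists>c>0. \<forall>x. c * norm x \<le> norm (B x))"

lemma bb_comp: assumes "bb B" "bb C" shows "bb (\<lambda>x. B (C x))"
proof -
  obtain c1 where c1: "c1 > 0" "\<And>x. c1 * norm x \<le> norm (B x)" using assms(1) unfolding bb_def by blast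
  obtain c2 where c2: "c2 > 0" "\<And>x. c2 * norm x \<le> norm (C x)" using assms(2) unfolding bb_def by blast
  have "c1 * c2 * norm x \<le> norm (B (C x))" for x
  proof -
    have "c1 * (c2 * norm x) \<le> c1 * norm (C x)" using c1(1) c2(2) by (simp add: mult_left_mono)
    also have "\<dots> \<le> norm (B (C x))" by (rule c1(2))
    finally show ?thesis by (simp add: mult.assoc)
  qed
  then show ?thesis unfolding bb_def using c1 c2 by (intro exI[of _ "c1*c2"]) auto
qed

lemma bb_coercive:
  fixes B :: "'a::real_inner \<Rightarrow> 'a"
  assumes c: "c > 0" and h: "\<And>x. c * (norm x)\<^sup>2 \<le> \<bar>inner (B x) x\<bar>"
  shows "bb B"
  unfolding bb_def
proof (intro exI[of _ c] conjI allI)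
  fix x
  have "c * norm x * norm x \<le> norm (B x) * norm x"
    using h[of x] Cauchy_Schwarz_ineq2[of "B x" x] by (simp add: power2_eq_square mult.assoc)
  then show "c * norm x \<le> norm (B x)"
    by (cases "x = 0") (auto simp: mult_le_cancel_right)
qed (use c in auto)

definition cev :: "real poly \<Rightarrow> complex \<Rightarrow> complex" where
  "cev p z = poly_op p (\<lambda>w. z * w) 1"

lemma zmul_lin: "linear (\<lambda>w::complex. z * w)"
  by (auto simp: linear_iff algebra_simps scaleR_conv_of_real)

lemma zmul_pow: "((\<lambda>w::complex. z * w) ^^ i) w = z ^ i * w"
  by (induction i) auto

lemma cev_sum: "cev p z = (\<Sum>i\<le>degree p. of_real (coeff p i) * z ^ i)"
  by (simp add: cev_def poly_op_def zmul_pow scaleR_conv_of_real)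

lemma cev_map: "cev p z = poly (map_poly complex_of_real p) z"
proof -
  have d: "degree (map_poly complex_of_real p) = degree p" by (rule degree_map_poly) simp
  show ?thesis unfolding cev_sum poly_altdef d by (simp add: coeff_map_poly)
qed

lemma cev_of_real: "cev p (of_real x) = of_real (poly p x)"
  unfolding cev_sum poly_altdef by simp

lemma cev_mult: "cev (p * q) z = cev p z * cev q z"
proof -
  have gen: "poly_op p (\<lambda>w. z * w) w = cev p z * w" for p w
    unfolding cev_def poly_op_def zmul_pow
    by (simp add: scaleR_conv_of_real sum_distrib_right sum_distrib_left mult.assoc mult.commute mult.left_commute)
  show ?thesis unfolding cev_def poly_op_mult[OF zmul_lin]
    using gen[of p "poly_op q (\<lambda>w. z * w) 1"] unfolding cev_def by simp
qed

lemma cev_add: "cev (p + q) z = cev p z + cev q z"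
  by (simp add: cev_def poly_op_add)

lemma lin_poly_zero:
  fixes m :: "real poly" and z :: complex
  assumes "degree m < 2" "cev m z = 0" "Im z \<noteq> 0"
  shows "m = 0"
proof -
  have "degree m \<le> 1" using assms(1) by simp
  then have "cev m z = of_real (coeff m 0) + of_real (coeff m 1) * z"
    unfolding cev_def by (simp add: poly_op_bound[of m 1] zmul_pow scaleR_conv_of_real)
  then have e: "of_real (coeff m 0) + of_real (coeff m 1) * z = 0" using assms(2) by simp
  have "Im (of_real (coeff m 0) + of_real (coeff m 1) * z) = coeff m 1 * Im z" by simp
  moreover have "Im (of_real (coeff m 0) + of_real (coeff m 1) * z) = 0" by (subst e) simp
  ultimately have "coeff m 1 * Im z = 0" by simp
  then have m1: "coeff m 1 = 0" using assms(3) by simp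
  then have m0: "coeff m 0 = 0" using e by simp
  have "coeff m i = 0" for i
  proof (cases "i \<le> 1")
    case True then show ?thesis using m0 m1 by (cases i) auto
  next
    case False then show ?thesis using \<open>degree m \<le> 1\<close> by (simp add: coeff_eq_0)
  qed
  then show ?thesis by (simp add: poly_eq_iff)
qed

context hs
begin

lemma A_zero[simp]: "A 0 = 0" using linear_0[OF A_lin] .

lemma bb_lin:
  assumes "\<rho> \<notin> {0..a}"
  shows "bb (poly_op [:-\<rho>, 1:] A)"
proof -
  have e: "poly_op [:-\<rho>, 1:] A x = (-\<rho>) *\<^sub>R x + A x" for x
    by (simp add: poly_op_pCons[OF A_lin] poly_op_const)
  show ?thesis
  proof (cases "\<rho> < 0")
    case True
    show ?thesis
    proof (rule bb_coercive[of "-\<rho>"])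
      fix x
      have "-\<rho> * (norm x)\<^sup>2 \<le> inner ((-\<rho>) *\<^sub>R x + A x) x"
        using A_pos[of x] by (simp add: inner_add_left inner_diff_left power2_norm_eq_inner)
      then show "-\<rho> * (norm x)\<^sup>2 \<le> \<bar>inner (poly_op [:-\<rho>, 1:] A x) x\<bar>" unfolding e by linarith
    qed (use True in simp)
  next
    case False
    then have r: "\<rho> > a" using assms by auto
    show ?thesis
    proof (rule bb_coercive[of "\<rho> - a"])
      fix x
      have "inner ((-\<rho>) *\<^sub>R x + A x) x \<le> -(\<rho> - a) * (norm x)\<^sup>2"
        using A_upper[of x] by (simp add: inner_add_left power2_norm_eq_inner algebra_simps)
      then show "(\<rho> - a) * (norm x)\<^sup>2 \<le> \<bar>inner (poly_op [:-\<rho>, 1:] A x) x\<bar>" unfolding e by linarith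
    qed (use r in simp)
  qed
qed

lemma bb_quad:
  assumes "c1\<^sup>2 < 4 * c0"
  shows "bb (poly_op [:c0, c1, 1:] A)"
proof (rule bb_coercive[of "c0 - c1\<^sup>2 / 4"])
  show "0 < c0 - c1\<^sup>2 / 4" using assms by simp
  fix x
  have e: "inner (poly_op [:c0, c1, 1:] A x) x = c0 * (norm x)\<^sup>2 + c1 * inner (A x) x + (norm (A x))\<^sup>2"
    by (simp add: poly_op_pCons[OF A_lin] poly_op_const A_add A_scale inner_add_left
        power2_norm_eq_inner A_sym[of "A x" x])
  have cs: "\<bar>inner (A x) x\<bar> \<le> norm (A x) * norm x" by (rule Cauchy_Schwarz_ineq2)
  have "c1 * inner (A x) x \<ge> - (\<bar>c1\<bar> * (norm (A x) * norm x))"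
  proof -
    have "\<bar>c1 * inner (A x) x\<bar> \<le> \<bar>c1\<bar> * (norm (A x) * norm x)"
      using cs by (simp add: abs_mult mult_left_mono)
    then show ?thesis by linarith
  qed
  moreover have "(norm (A x) - \<bar>c1\<bar> / 2 * norm x)\<^sup>2 \<ge> 0" by simp
  ultimately have "(c0 - c1\<^sup>2 / 4) * (norm x)\<^sup>2 \<le> c0 * (norm x)\<^sup>2 + c1 * inner (A x) x + (norm (A x))\<^sup>2"
    by (simp add: power2_eq_square algebra_simps)
  then show "(c0 - c1\<^sup>2 / 4) * (norm x)\<^sup>2 \<le> \<bar>inner (poly_op [:c0, c1, 1:] A x) x\<bar>"
    unfolding e by linarith
qed

lemma bb_const: "c \<noteq> 0 \<Longrightarrow> bb (poly_op [:c:] A)"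
  unfolding bb_def poly_op_const by (intro exI[of _ "\<bar>c\<bar>"]) auto

lemma bb_noroot:
  assumes "r \<noteq> 0" "\<forall>t\<in>{0..a}. poly r t \<noteq> 0"
  shows "bb (poly_op r A)"
  using assms
proof (induction "degree r" arbitrary: r rule: less_induct)
  case less
  show ?case
  proof (cases "degree r = 0")
    case True
    then obtain c where "r = [:c:]" by (metis degree_eq_zeroE)
    then show ?thesis using less.prems bb_const by auto
  next
    case False
    define rc where "rc = map_poly complex_of_real r"
    have "degree rc = degree r" unfolding rc_def by (rule degree_map_poly) simp
    then have "\<not> constant (poly rc)" using False constant_degree by metis
    then obtain z where z: "poly rc z = 0" using fundamental_theorem_of_algebra by blast
    then have cz: "cev r z = 0" by (simp add: cev_map rc_def)
    show ?thesis
    proof (cases "Im z = 0")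
      case True
      define \<rho> where "\<rho> = Re z"
      have "z = of_real \<rho>" using True unfolding \<rho>_def by (simp add: complex_eq_iff)
      then have "poly r \<rho> = 0" using cz cev_of_real[of r \<rho>] by simp
      then have rho: "\<rho> \<notin> {0..a}" using less.prems by auto
      obtain h where h: "r = [:-\<rho>, 1:] * h" using \<open>poly r \<rho> = 0\<close> poly_eq_0_iff_dvd by (metis dvdE)
      have h0: "h \<noteq> 0" using less.prems h by auto
      have p0: "[:-\<rho>, 1:] \<noteq> (0::real poly)" by simp
      have "degree r = degree [:-\<rho>, 1:] + degree h" unfolding h using degree_mult_eq[OF p0 h0] .
      then have dh: "degree h < degree r" by simp
      have rh: "\<forall>t\<in>{0..a}. poly h t \<noteq> 0" using less.prems h by auto
      have "bb (poly_op h A)" using less.hyps[OF dh h0 rh] .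
      then have "bb (\<lambda>x. poly_op [:-\<rho>, 1:] A (poly_op h A x))" using bb_comp bb_lin[OF rho] by blast
      moreover have "poly_op r A = (\<lambda>x. poly_op [:-\<rho>, 1:] A (poly_op h A x))"
        unfolding h by (rule ext) (rule poly_op_mult[OF A_lin])
      ultimately show ?thesis by simp
    next
      case False
      define Q where "Q = [:(Re z)\<^sup>2 + (Im z)\<^sup>2, -2 * Re z, 1:]"
      have Q0: "Q \<noteq> 0" unfolding Q_def by simp
      have dQ: "degree Q = 2" unfolding Q_def by simp
      have cQ: "cev Q z = 0"
      proof -
        have "cev Q z = (\<Sum>i\<le>2. of_real (coeff Q i) * z ^ i)" unfolding cev_sum dQ ..
        also have "\<dots> = of_real (coeff Q 0) + of_real (coeff Q 1) * z + of_real (coeff Q 2) * z^2"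
          by (simp add: eval_nat_numeral)
        also have "\<dots> = 0" unfolding Q_def
          by (simp add: complex_eq_iff power2_eq_square algebra_simps eval_nat_numeral)
        finally show ?thesis .
      qed
      define h where "h = r div Q"
      define m where "m = r mod Q"
      have rd: "r = Q * h + m" unfolding h_def m_def by simp
      have "cev m z = 0" using cz cQ rd by (metis cev_add cev_mult add_0 mult_zero_left)
      moreover have "degree m < 2"
        using degree_mod_less[OF Q0, of r] dQ unfolding m_def by auto
      ultimately have "m = 0" using lin_poly_zero False by blast
      then have rh: "r = Q * h" using rd by simp
      have h0: "h \<noteq> 0" using less.prems rh by auto
      have dh: "degree h < degree r" using rh h0 Q0 dQ by (simp add: degree_mult_eq)
      have nr: "\<forall>t\<in>{0..a}. poly h t \<noteq> 0" using less.prems rh by auto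
      have "bb (poly_op h A)" using less.hyps[OF dh h0 nr] .
      moreover have "bb (poly_op Q A)"
      proof -
        have "0 < Im z * Im z" using False by (cases "Im z > 0") (auto simp: zero_less_mult_iff)
        then show ?thesis unfolding Q_def
          by (intro bb_quad) (simp add: power2_eq_square algebra_simps)
      qed
      ultimately have "bb (\<lambda>x. poly_op Q A (poly_op h A x))" using bb_comp by blast
      moreover have "poly_op r A = (\<lambda>x. poly_op Q A (poly_op h A x))"
        unfolding rh by (rule ext) (rule poly_op_mult[OF A_lin])
      ultimately show ?thesis by simp
    qed
  qed
qed

end

lemma disc:
  fixes \<alpha> \<beta> \<gamma> :: real
  assumes h: "\<And>s. 0 \<le> \<alpha> + 2 * s * \<beta> + s\<^sup>2 * \<gamma>" and g: "\<gamma> \<ge> 0"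
  shows "\<beta>\<^sup>2 \<le> \<alpha> * \<gamma>"
proof (cases "\<gamma> = 0")
  case True
  have "\<beta> = 0"
  proof (rule ccontr)
    assume b: "\<beta> \<noteq> 0"
    have "0 \<le> \<alpha> + 2 * (-(\<alpha>+1)/(2*\<beta>)) * \<beta> + (-(\<alpha>+1)/(2*\<beta>))\<^sup>2 * \<gamma>" by (rule h)
    also have "\<dots> = -1" using b True by (simp add: field_simps)
    finally show False by simp
  qed
  then show ?thesis using True by simp
next
  case False
  then have gp: "\<gamma> > 0" using g by simp
  have "0 \<le> \<alpha> + 2 * (-\<beta>/\<gamma>) * \<beta> + (-\<beta>/\<gamma>)\<^sup>2 * \<gamma>" by (rule h)
  also have "\<dots> = \<alpha> - \<beta>\<^sup>2 / \<gamma>" using gp by (simp add: field_simps power2_eq_square)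
  finally have "\<beta>\<^sup>2 / \<gamma> \<le> \<alpha>" by simp
  then show ?thesis using gp by (simp add: divide_le_eq mult.commute)
qed

lemma pcs:
  fixes B :: "'a::real_inner \<Rightarrow> 'a"
  assumes lin: "linear B" and sym: "\<And>u v. inner (B u) v = inner u (B v)"
    and pos: "\<And>u. inner (B u) u \<ge> 0"
  shows "(inner (B x) y)\<^sup>2 \<le> inner (B x) x * inner (B y) y"
proof (rule disc)
  fix s :: real
  have "inner (B (x + s *\<^sub>R y)) (x + s *\<^sub>R y) = inner (B x) x + 2 * s * inner (B x) y + s\<^sup>2 * inner (B y) y"
  proof -
    have s1: "inner (B y) x = inner (B x) y" by (metis sym inner_commute)
    show ?thesis
      by (simp add: linear_add[OF lin] linear_scale[OF lin] inner_add_left inner_add_right s1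
          power2_eq_square algebra_simps)
  qed
  then show "0 \<le> inner (B x) x + 2 * s * inner (B x) y + s\<^sup>2 * inner (B y) y" using pos[of "x + s *\<^sub>R y"] by simp
qed (rule pos)

context hs
begin

lemma a_in: "0 \<in> {0..a}" using a_nonneg by simp

lemma PA_norm_bound:
  assumes M: "\<forall>t\<in>{0..a}. \<bar>poly q t\<bar> \<le> M"
  shows "norm (poly_op q A x) \<le> M * norm x"
proof -
  define Q where "Q = poly_op q A"
  have blQ: "bounded_linear Q" unfolding Q_def by (rule poly_op_bl[OF A_bl])
  define \<mu> where "\<mu> = onorm Q"
  have Qle: "norm (Q y) \<le> \<mu> * norm y" for y unfolding \<mu>_def by (rule onorm[OF blQ])
  have M0: "M \<ge> 0" using M a_in by force
  have "\<mu> \<le> M"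
  proof (rule ccontr)
    assume "\<not> \<mu> \<le> M"
    then have muM: "\<mu> > M" by simp
    then have mu0: "\<mu> > 0" using M0 by simp
    define r where "r = [:\<mu>\<^sup>2:] - q * q"
    have pr: "poly r t = \<mu>\<^sup>2 - (poly q t)\<^sup>2" for t by (simp add: r_def power2_eq_square)
    have rpos: "poly r t > 0" if "t \<in> {0..a}" for t
    proof -
      have "\<bar>poly q t\<bar> < \<mu>" using M that muM by force
      then have "(poly q t)\<^sup>2 < \<mu>\<^sup>2"
        by (metis abs_ge_zero abs_power2 power2_abs power_strict_mono zero_less_numeral)
      then show ?thesis using pr by simp
    qed
    have r0: "r \<noteq> 0" using rpos[OF a_in] by auto
    have "bb (poly_op r A)" using bb_noroot[OF r0] rpos by force
    then obtain c where c: "c > 0" "\<And>y. c * norm y \<le> norm (poly_op r A y)" unfolding bb_def by blast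
    define B where "B = poly_op r A"
    have Bx: "B y = \<mu>\<^sup>2 *\<^sub>R y - Q (Q y)" for y
      unfolding B_def Q_def r_def by (simp add: poly_op_diff poly_op_const poly_op_mult[OF A_lin])
    have Bin: "inner (B y) y = \<mu>\<^sup>2 * (norm y)\<^sup>2 - (norm (Q y))\<^sup>2" for y
      unfolding Bx using PA_sym[of q "Q y" y] unfolding Q_def
      by (simp add: inner_diff_left power2_norm_eq_inner)
    have Bpos: "inner (B y) y \<ge> 0" for y
    proof -
      have "norm (Q y) \<le> \<mu> * norm y" by (rule Qle)
      then have "(norm (Q y))\<^sup>2 \<le> (\<mu> * norm y)\<^sup>2" by (simp add: power_mono)
      then show ?thesis unfolding Bin by (simp add: power_mult_distrib)
    qed
    have blB: "bounded_linear B" unfolding B_def by (rule poly_op_bl[OF A_bl])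
    define nB where "nB = onorm B"
    have nB0: "nB \<ge> 0" unfolding nB_def by (rule onorm_pos_le[OF blB])
    have Bsq: "(norm (B y))\<^sup>2 \<le> nB * inner (B y) y" for y
    proof -
      have lin: "linear B" using blB bounded_linear.linear by blast
      have "(inner (B y) (B y))\<^sup>2 \<le> inner (B y) y * inner (B (B y)) (B y)"
        by (rule pcs[OF lin _ Bpos]) (simp add: B_def PA_sym)
      also have "inner (B (B y)) (B y) \<le> nB * (norm (B y))\<^sup>2"
      proof -
        have "inner (B (B y)) (B y) \<le> norm (B (B y)) * norm (B y)" by (rule norm_cauchy_schwarz)
        also have "\<dots> \<le> nB * norm (B y) * norm (B y)"
          unfolding nB_def by (intro mult_right_mono onorm[OF blB]) simp
        finally show ?thesis by (simp add: power2_eq_square)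
      qed
      then have "inner (B y) y * inner (B (B y)) (B y) \<le> inner (B y) y * (nB * (norm (B y))\<^sup>2)"
        using Bpos by (simp add: mult_left_mono)
      finally have "((norm (B y))\<^sup>2)\<^sup>2 \<le> (nB * inner (B y) y) * (norm (B y))\<^sup>2"
        by (simp add: power2_norm_eq_inner algebra_simps)
      then show ?thesis
        by (cases "norm (B y) = 0") (auto simp: power2_eq_square mult_le_cancel_right)
    qed
    define \<epsilon> where "\<epsilon> = min \<mu> (c\<^sup>2 / (4 * (nB + 1) * (\<mu> + 1)))"
    have eps: "\<epsilon> > 0" "\<epsilon> \<le> \<mu>" "\<epsilon> \<le> c\<^sup>2 / (4 * (nB + 1) * (\<mu> + 1))"
      unfolding \<epsilon>_def using mu0 c nB0 by auto
    have "\<mu> - \<epsilon> < (SUP y. norm (Q y) / norm y)"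
      using eps unfolding \<mu>_def onorm_def by simp
    then obtain x0 where x0: "\<mu> - \<epsilon> < norm (Q x0) / norm x0"
    proof (subst (asm) less_cSUP_iff)
      show "bdd_above (range (\<lambda>y. norm (Q y) / norm y))"
        using le_onorm[OF blQ] by (intro bdd_aboveI2) blast
    qed auto
    have nx0: "norm x0 > 0"
    proof (rule ccontr)
      assume "\<not> norm x0 > 0" then have "x0 = 0" by simp
      then show False using x0 eps by simp
    qed
    have q1: "(\<mu> - \<epsilon>) * norm x0 < norm (Q x0)" using x0 nx0 by (simp add: pos_less_divide_eq)
    have "((\<mu> - \<epsilon>) * norm x0)\<^sup>2 < (norm (Q x0))\<^sup>2"
      using q1 eps nx0 by (intro power_strict_mono) auto
    then have l1: "(\<mu> - \<epsilon>)\<^sup>2 * (norm x0)\<^sup>2 < (norm (Q x0))\<^sup>2" by (simp only: power_mult_distrib)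
    have l2: "(\<mu>\<^sup>2 - (\<mu> - \<epsilon>)\<^sup>2) * (norm x0)\<^sup>2 = \<mu>\<^sup>2 * (norm x0)\<^sup>2 - (\<mu> - \<epsilon>)\<^sup>2 * (norm x0)\<^sup>2"
      by (simp add: left_diff_distrib)
    have "inner (B x0) x0 < (\<mu>\<^sup>2 - (\<mu> - \<epsilon>)\<^sup>2) * (norm x0)\<^sup>2"
      unfolding Bin l2 using l1 by linarith
    also have "\<dots> \<le> (2 * \<mu> * \<epsilon>) * (norm x0)\<^sup>2"
      using eps by (intro mult_right_mono) (auto simp: power2_eq_square algebra_simps)
    finally have i1: "inner (B x0) x0 < 2 * \<mu> * \<epsilon> * (norm x0)\<^sup>2" .
    have "(c * norm x0)\<^sup>2 \<le> (norm (B x0))\<^sup>2" using c(2)[of x0] c(1) unfolding B_def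
      by (intro power_mono) auto
    also have "\<dots> \<le> nB * inner (B x0) x0" by (rule Bsq)
    also have "\<dots> \<le> nB * (2 * \<mu> * \<epsilon> * (norm x0)\<^sup>2)" using i1 nB0 by (intro mult_left_mono) auto
    finally have "c\<^sup>2 * (norm x0)\<^sup>2 \<le> (nB * 2 * \<mu> * \<epsilon>) * (norm x0)\<^sup>2"
      by (simp add: power_mult_distrib algebra_simps)
    then have cc: "c\<^sup>2 \<le> nB * 2 * \<mu> * \<epsilon>" using nx0 by simp
    have D: "4 * (nB + 1) * (\<mu> + 1) > 0" using nB0 mu0 by simp
    have "\<epsilon> * (4 * (nB + 1) * (\<mu> + 1)) \<le> c\<^sup>2" using eps(3) D by (simp add: le_divide_eq)
    then have "(4 * (nB + 1) * (\<mu> + 1)) * \<epsilon> \<le> (nB * 2 * \<mu>) * \<epsilon>" using cc by (simp add: mult.commute)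
    then have "4 * (nB + 1) * (\<mu> + 1) \<le> nB * 2 * \<mu>" using eps(1) by simp
    moreover have "nB * \<mu> \<ge> 0" using nB0 mu0 by simp
    moreover have "4 * (nB + 1) * (\<mu> + 1) = 4 * (nB * \<mu>) + 4 * nB + 4 * \<mu> + 4" by (simp add: algebra_simps)
    moreover have "nB * 2 * \<mu> = 2 * (nB * \<mu>)" by simp
    ultimately show False using nB0 mu0 by linarith
  qed
  then show ?thesis using Qle[of x] unfolding Q_def
    by (meson mult_right_mono norm_ge_zero order_trans)
qed

lemma poly_bounded: "\<exists>M. \<forall>t\<in>{0..a}. \<bar>poly p t\<bar> \<le> M"
proof -
  have "compact (poly p ` {0..a})"
    by (intro compact_continuous_image continuous_intros) simp
  then have "bounded (poly p ` {0..a})" by (rule compact_imp_bounded)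
  then show ?thesis unfolding Elementary_Metric_Spaces.bounded_iff by auto
qed

lemma PA_pos:
  assumes "\<forall>t\<in>{0..a}. 0 \<le> poly p t"
  shows "0 \<le> inner (poly_op p A x) x"
proof -
  obtain M where M: "\<forall>t\<in>{0..a}. \<bar>poly p t\<bar> \<le> M" using poly_bounded by blast
  define q where "q = p - [:M/2:]"
  have "\<forall>t\<in>{0..a}. \<bar>poly q t\<bar> \<le> M/2"
  proof
    fix t assume t: "t \<in> {0..a}"
    have "\<bar>poly p t\<bar> \<le> M" "0 \<le> poly p t" using M assms t by auto
    then have "poly p t \<le> M" "0 \<le> poly p t" by auto
    moreover have "poly q t = poly p t - M/2" unfolding q_def by simp
    ultimately show "\<bar>poly q t\<bar> \<le> M/2" by (simp only: abs_le_iff) linarith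
  qed
  then have n: "norm (poly_op q A x) \<le> M/2 * norm x" by (rule PA_norm_bound)
  have e: "poly_op p A x = poly_op q A x + (M/2) *\<^sub>R x"
    unfolding q_def by (simp add: poly_op_diff poly_op_const)
  have "- (M/2 * norm x * norm x) \<le> inner (poly_op q A x) x"
  proof -
    have "\<bar>inner (poly_op q A x) x\<bar> \<le> norm (poly_op q A x) * norm x" by (rule Cauchy_Schwarz_ineq2)
    also have "\<dots> \<le> M/2 * norm x * norm x" using mult_right_mono[OF n norm_ge_zero[of x]] by simp
    finally show ?thesis by linarith
  qed
  then show ?thesis unfolding e by (simp add: inner_add_left power2_norm_eq_inner[symmetric] power2_eq_square)
qed

lemma PA_ge:
  assumes "\<forall>t\<in>{0..a}. c \<le> poly p t"
  shows "c * (norm x)\<^sup>2 \<le> inner (poly_op p A x) x"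
proof -
  have "0 \<le> inner (poly_op (p - [:c:]) A x) x" using assms by (intro PA_pos) simp
  then show ?thesis by (simp add: poly_op_diff poly_op_const inner_diff_left power2_norm_eq_inner)
qed

lemma PA_mono:
  assumes "\<forall>t\<in>{0..a}. poly p t \<le> poly q t"
  shows "inner (poly_op p A x) x \<le> inner (poly_op q A x) x"
proof -
  have "0 \<le> inner (poly_op (q - p) A x) x" using assms by (intro PA_pos) simp
  then show ?thesis by (simp add: poly_op_diff inner_diff_left)
qed

lemma PA_inj:
  assumes "c > 0" "\<forall>t\<in>{0..a}. c \<le> poly p t" "poly_op p A x = poly_op p A y"
  shows "x = y"
proof -
  have L: "linear (poly_op p A)" using poly_op_bl[OF A_bl] bounded_linear.linear by blast
  have "poly_op p A (x - y) = 0"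
    using assms(3) linear_diff[OF L, of x y] by simp
  then have "c * (norm (x - y))\<^sup>2 \<le> 0" using PA_ge[OF assms(2), of "x - y"] by simp
  then show ?thesis using assms(1) by (simp add: mult_le_0_iff)
qed

lemma PA_surj:
  assumes c: "c > 0" and pc: "\<forall>t\<in>{0..a}. c \<le> poly p t"
  shows "\<exists>x. poly_op p A x = v"
proof -
  define P where "P = poly_op p A"
  have blP: "bounded_linear P" unfolding P_def by (rule poly_op_bl[OF A_bl])
  have linP: "linear P" using blP bounded_linear.linear by blast
  have symP: "inner (P u) w = inner u (P w)" for u w unfolding P_def by (rule PA_sym)
  have coer: "c * (norm u)\<^sup>2 \<le> inner (P u) u" for u unfolding P_def by (rule PA_ge[OF pc])
  define J where "J x = inner (P x) x - 2 * inner v x" for x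
  have cont: "continuous_on UNIV J" unfolding J_def
    by (intro continuous_intros bounded_linear.continuous_on[OF blP])
  have lb: "J x \<ge> - (norm v)\<^sup>2 / c" for x
  proof -
    have "inner v x \<le> norm v * norm x" by (rule norm_cauchy_schwarz)
    then have "J x \<ge> c * (norm x)\<^sup>2 - 2 * (norm v * norm x)" unfolding J_def using coer[of x] by linarith
    moreover have "c * (norm x)\<^sup>2 - 2 * (norm v * norm x) \<ge> - (norm v)\<^sup>2 / c"
    proof -
      have "0 \<le> (c * norm x - norm v)\<^sup>2" by simp
      then have "0 \<le> c * (c * (norm x)\<^sup>2 - 2 * (norm v * norm x)) + (norm v)\<^sup>2"
        by (simp add: power2_eq_square algebra_simps)
      then show ?thesis using c by (simp add: field_simps)
    qed
    ultimately show ?thesis by linarith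
  qed
  have expand: "J (x + s *\<^sub>R z) = J x + s * (2 * inner (P x) z - 2 * inner v z) + s\<^sup>2 * inner (P z) z" for x z s
  proof -
    have s1: "inner (P z) x = inner (P x) z" by (metis symP inner_commute)
    show ?thesis unfolding J_def
      by (simp add: linear_add[OF linP] linear_scale[OF linP] inner_add_left inner_add_right s1
          power2_eq_square algebra_simps)
  qed
  have mid: "(c/2) * (norm (x - z))\<^sup>2 \<le> J x + J z - 2 * J ((1/2) *\<^sub>R (x + z))" for x z
  proof -
    have hh: "(1/2) *\<^sub>R x + (1/2) *\<^sub>R x = x"
    proof -
      have "(1/2) *\<^sub>R x + (1/2) *\<^sub>R x = ((1/2) + (1/2)) *\<^sub>R x" by (rule scaleR_add_left[symmetric])
      then show ?thesis by simp
    qed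
    have e1: "(1/2) *\<^sub>R (x + z) = x + (-1/2) *\<^sub>R (x - z)" using hh by (simp add: algebra_simps)
    have e2: "J z = J (x + (-1) *\<^sub>R (x - z))" by simp
    have e3: "J ((1/2) *\<^sub>R (x + z)) = J (x + (-1/2) *\<^sub>R (x - z))" using e1 by simp
    have "J x + J z - 2 * J ((1/2) *\<^sub>R (x + z)) = (1/2) * inner (P (x - z)) (x - z)"
      unfolding e2 e3 expand by (simp add: power2_eq_square algebra_simps)
    then show ?thesis using coer[of "x - z"] by simp
  qed
  obtain x where x: "\<And>z. J x \<le> J z" using min_exists[OF cont lb _ mid] c by auto
  have "inner (P x) z = inner v z" for z
  proof -
    have "s * (2 * inner (P x) z - 2 * inner v z) + s\<^sup>2 * inner (P z) z \<ge> 0" for s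
      using x[of "x + s *\<^sub>R z"] unfolding expand by linarith
    then have "2 * inner (P x) z - 2 * inner v z = 0" by (rule quad_zero[where c="inner (P z) z"])
    then show ?thesis by simp
  qed
  then have "P x = v" by (rule inner_ext)
  then show ?thesis unfolding P_def by blast
qed

end

context hs
begin

lemma powr_k: assumes "t \<ge> 0" "k \<ge> 1" shows "t powr real k = t ^ k"
  using assms by (cases "t = 0") (auto simp: powr_realpow)

lemma TTpow_eq:
  assumes k: "k \<ge> 1"
  shows "TTpow T (real k) x = (A ^^ k) x"
proof -
  have oA: "onorm (adj T \<circ> T) = a" unfolding a_def A_def ..
  have P: "\<forall>\<epsilon>>0. \<exists>\<delta>>0. \<forall>p. (\<forall>t\<in>{0..a}. \<bar>poly p t - t powr real k\<bar> < \<delta>) \<longrightarrow>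
      norm (poly_op p A x - (A ^^ k) x) < \<epsilon>"
  proof (intro allI impI)
    fix \<epsilon> :: real assume e: "\<epsilon> > 0"
    define \<delta> where "\<delta> = \<epsilon> / (norm x + 1)"
    have d: "\<delta> > 0" unfolding \<delta>_def using e by (simp add: add_nonneg_pos)
    show "\<exists>\<delta>>0. \<forall>p. (\<forall>t\<in>{0..a}. \<bar>poly p t - t powr real k\<bar> < \<delta>) \<longrightarrow>
      norm (poly_op p A x - (A ^^ k) x) < \<epsilon>"
    proof (intro exI[of _ \<delta>] conjI allI impI d)
      fix p assume hp: "\<forall>t\<in>{0..a}. \<bar>poly p t - t powr real k\<bar> < \<delta>"
      define q where "q = p - monom 1 k"
      have "\<forall>t\<in>{0..a}. \<bar>poly q t\<bar> \<le> \<delta>"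
      proof
        fix t assume t: "t \<in> {0..a}"
        then have e1: "t powr real k = t ^ k" using powr_k k by auto
        have "\<bar>poly p t - t powr real k\<bar> < \<delta>" using hp t by blast
        then show "\<bar>poly q t\<bar> \<le> \<delta>" unfolding q_def e1 by (simp add: poly_monom)
      qed
      then have "norm (poly_op q A x) \<le> \<delta> * norm x" by (rule PA_norm_bound)
      also have "\<dots> < \<epsilon>"
      proof -
        have "\<delta> * norm x = \<epsilon> * (norm x / (norm x + 1))" unfolding \<delta>_def by simp
        also have "\<dots> < \<epsilon> * 1"
        proof (intro mult_strict_left_mono e)
          have "norm x + 1 > 0" by (simp add: add_nonneg_pos)
          then show "norm x / (norm x + 1) < 1" by (simp add: divide_less_eq)
        qed
        finally show ?thesis by simp
      qed
      finally show "norm (poly_op p A x - (A ^^ k) x) < \<epsilon>"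
        unfolding q_def by (simp add: poly_op_diff poly_op_monom[OF A_lin])
    qed
  qed
  have "fcalc A (\<lambda>t. t powr real k) x = (A ^^ k) x"
    unfolding fcalc_def a_def[symmetric]
  proof (rule the_equality)
    show "\<forall>\<epsilon>>0. \<exists>\<delta>>0. \<forall>p. (\<forall>t\<in>{0..a}. \<bar>poly p t - t powr real k\<bar> < \<delta>) \<longrightarrow>
      norm (poly_op p A x - (A ^^ k) x) < \<epsilon>" by (rule P)
    fix y assume Y: "\<forall>\<epsilon>>0. \<exists>\<delta>>0. \<forall>p. (\<forall>t\<in>{0..a}. \<bar>poly p t - t powr real k\<bar> < \<delta>) \<longrightarrow>
      norm (poly_op p A x - y) < \<epsilon>"
    have "norm ((A ^^ k) x - y) < \<epsilon>" if e: "\<epsilon> > 0" for \<epsilon>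
    proof -
      obtain \<delta> where d: "\<delta> > 0" and hd: "\<And>p. (\<forall>t\<in>{0..a}. \<bar>poly p t - t powr real k\<bar> < \<delta>) \<Longrightarrow>
        norm (poly_op p A x - y) < \<epsilon>" using Y e by blast
      have "\<forall>t\<in>{0..a}. \<bar>poly (monom 1 k) t - t powr real k\<bar> < \<delta>"
        using d powr_k k by (auto simp: poly_monom)
      then have "norm (poly_op (monom 1 k) A x - y) < \<epsilon>" by (rule hd)
      then show ?thesis by (simp add: poly_op_monom[OF A_lin])
    qed
    then have "norm ((A ^^ k) x - y) = 0"
      by (metis norm_ge_zero order_less_irrefl order_le_less)
    then show "y = (A ^^ k) x" by simp
  qed
  then show ?thesis unfolding TTpow_def A_def by simp
qed

lemma Apow_lin: "(A ^^ k) (u - v) = (A ^^ k) u - (A ^^ k) v"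
  by (induction k) (auto simp: linear_diff[OF A_lin])

lemma Apow_inj: "(A ^^ k) u = (A ^^ k) v \<Longrightarrow> u = v"
proof (induction k arbitrary: u v)
  case 0 then show ?case by simp
next
  case (Suc k)
  have h: "A ((A ^^ k) u - (A ^^ k) v) = 0" using Suc.prems by (simp add: linear_diff[OF A_lin])
  have "(A ^^ k) u = (A ^^ k) v" using A_inj[OF h] by simp
  then show ?case by (rule Suc.IH)
qed

lemma Xspace_eq: "k \<ge> 1 \<Longrightarrow> Xspace T (real k) = range (A ^^ k)"
  unfolding Xspace_def using TTpow_eq by (simp add: fun_eq_iff image_def)

lemma gnorm_eq: "k \<ge> 1 \<Longrightarrow> gnorm T (real k) ((A ^^ k) z) = norm z"
proof -
  assume k: "k \<ge> 1"
  have "(THE z'. TTpow T (real k) z' = (A ^^ k) z) = z"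
  proof (rule the_equality)
    show "TTpow T (real k) z = (A ^^ k) z" by (simp add: TTpow_eq[OF k])
    fix z' assume "TTpow T (real k) z' = (A ^^ k) z"
    then have "(A ^^ k) z' = (A ^^ k) z" by (simp add: TTpow_eq[OF k])
    then show "z' = z" by (rule Apow_inj)
  qed
  then show ?thesis unfolding gnorm_def by simp
qed

lemma Kfun_eq:
  assumes "k \<ge> 1"
  shows "Kfun T (real k) t e = Inf ((\<lambda>z. sqrt ((norm (e - (A ^^ k) z))\<^sup>2 + t\<^sup>2 * (norm z)\<^sup>2)) ` UNIV)"
  unfolding Kfun_def Xspace_eq[OF assms] image_image gnorm_eq[OF assms] ..

lemma Kfun_le:
  assumes "k \<ge> 1"
  shows "Kfun T (real k) t e \<le> sqrt ((norm (e - (A ^^ k) z))\<^sup>2 + t\<^sup>2 * (norm z)\<^sup>2)"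
  unfolding Kfun_eq[OF assms]
  by (rule cInf_lower) (auto intro: bdd_belowI2[where m=0])

lemma Kfun_ge:
  assumes "k \<ge> 1" and "\<And>z. m \<le> sqrt ((norm (e - (A ^^ k) z))\<^sup>2 + t\<^sup>2 * (norm z)\<^sup>2)"
  shows "m \<le> Kfun T (real k) t e"
  unfolding Kfun_eq[OF assms(1)]
  by (rule cInf_greatest) (use assms(2) in auto)

lemma P1_ge: "\<alpha> > 0 \<Longrightarrow> \<forall>t\<in>{0..a}. \<alpha> \<le> poly [:\<alpha>, 1:] t"
  by simp

lemma tikh_step:
  assumes al: "\<alpha> > 0"
  shows "poly_op [:\<alpha>, 1:] A (xd - tikh T (T xd) x0 \<alpha> (Suc j)) = \<alpha> *\<^sub>R (xd - tikh T (T xd) x0 \<alpha> j)"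
proof -
  define c where "c = tikh T (T xd) x0 \<alpha> j"
  obtain x where x: "poly_op [:\<alpha>, 1:] A x = A xd + \<alpha> *\<^sub>R c"
    using PA_surj[OF al P1_ge[OF al]] by blast
  have px: "poly_op [:\<alpha>, 1:] A u = \<alpha> *\<^sub>R u + A u" for u
    by (simp add: poly_op_pCons[OF A_lin] poly_op_const)
  define J where "J z = (norm (T xd - T z))\<^sup>2 + \<alpha> * (norm (z - c))\<^sup>2" for z
  have Jz: "J z = J x + (norm (T (z - x)))\<^sup>2 + \<alpha> * (norm (z - x))\<^sup>2" for z
  proof -
    define d where "d = z - x"
    have z: "z = x + d" unfolding d_def by simp
    have cross: "inner (T xd - T x) (T d) = \<alpha> * inner (x - c) d"
    proof -
      have "inner (T xd - T x) (T d) = inner (A xd - A x) d"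
        by (simp add: inner_diff_left A_inner)
      also have "A xd - A x = \<alpha> *\<^sub>R (x - c)" using x px[of x] by (simp add: algebra_simps)
      finally show ?thesis by simp
    qed
    have "J z = (norm ((T xd - T x) - T d))\<^sup>2 + \<alpha> * (norm ((x - c) + d))\<^sup>2"
      unfolding J_def z by (simp add: T_lin algebra_simps)
    also have "\<dots> = J x + (norm (T d))\<^sup>2 + \<alpha> * (norm d)\<^sup>2"
      unfolding J_def norm_diff_sq norm_add_sq cross by (simp add: algebra_simps)
    finally show ?thesis unfolding d_def .
  qed
  have "tikh T (T xd) x0 \<alpha> (Suc j) = x"
    unfolding tikh.simps c_def[symmetric]
  proof (rule the_equality)
    show "\<forall>z. (norm (T xd - T x))\<^sup>2 + \<alpha> * (norm (x - c))\<^sup>2 \<le> (norm (T xd - T z))\<^sup>2 + \<alpha> * (norm (z - c))\<^sup>2"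
    proof
      fix z
      have "0 \<le> \<alpha> * (norm (z - x))\<^sup>2" using al by simp
      then have "J x \<le> J z" using Jz[of z] zero_le_power2[of "norm (T (z - x))"] by linarith
      then show "(norm (T xd - T x))\<^sup>2 + \<alpha> * (norm (x - c))\<^sup>2 \<le> (norm (T xd - T z))\<^sup>2 + \<alpha> * (norm (z - c))\<^sup>2"
        unfolding J_def .
    qed
    fix x' assume "\<forall>z. (norm (T xd - T x'))\<^sup>2 + \<alpha> * (norm (x' - c))\<^sup>2 \<le> (norm (T xd - T z))\<^sup>2 + \<alpha> * (norm (z - c))\<^sup>2"
    then have "J x' \<le> J x" unfolding J_def by blast
    then have "\<alpha> * (norm (x' - x))\<^sup>2 \<le> 0" using Jz[of x'] zero_le_power2[of "norm (T (x' - x))"] by linarith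
    then show "x' = x" using al by (simp add: mult_le_0_iff)
  qed
  then show ?thesis unfolding c_def[symmetric] px
    using x px[of x] by (simp add: linear_diff[OF A_lin] algebra_simps)
qed

lemma tikh_err:
  assumes al: "\<alpha> > 0"
  shows "poly_op ([:\<alpha>, 1:] ^ j) A (xd - tikh T (T xd) x0 \<alpha> j) = \<alpha> ^ j *\<^sub>R (xd - x0)"
proof (induction j)
  case 0 then show ?case by (simp add: poly_op_def)
next
  case (Suc j)
  have "poly_op ([:\<alpha>, 1:] ^ Suc j) A (xd - tikh T (T xd) x0 \<alpha> (Suc j))
      = poly_op ([:\<alpha>, 1:] ^ j) A (poly_op [:\<alpha>, 1:] A (xd - tikh T (T xd) x0 \<alpha> (Suc j)))"
    by (simp only: power_Suc2 poly_op_mult[OF A_lin])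
  also have "\<dots> = \<alpha> *\<^sub>R poly_op ([:\<alpha>, 1:] ^ j) A (xd - tikh T (T xd) x0 \<alpha> j)"
    by (simp only: tikh_step[OF al] poly_op_linear(2)[OF A_lin])
  also have "\<dots> = \<alpha> ^ Suc j *\<^sub>R (xd - x0)" using Suc by simp
  finally show ?case .
qed

end

lemma pow_add_ge:
  fixes x y :: real
  assumes "x \<ge> 0" "y \<ge> 0" "n \<ge> 1"
  shows "x ^ n + y ^ n \<le> (x + y) ^ n"
  using assms(3)
proof (induction n rule: dec_induct)
  case base then show ?case by simp
next
  case (step n)
  have "x ^ Suc n + y ^ Suc n \<le> (x + y) * (x ^ n + y ^ n)"
    using assms by (simp add: algebra_simps)
  also have "\<dots> \<le> (x + y) * (x + y) ^ n" using step.IH assms by (intro mult_left_mono) auto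
  finally show ?case by simp
qed

lemma convex_bound:
  fixes l al w :: real
  assumes w: "0 < w" "w < 1" and k: "k \<ge> 1"
  shows "(l + al) ^ (2*k) \<le> l ^ (2*k) / (1 - w) ^ (2*k - 1) + al ^ (2*k) / w ^ (2*k - 1)"
proof -
  have cv: "convex_on UNIV (\<lambda>x::real. x ^ (2*k))" by (rule convex_power_even) simp
  have "((1 - w) *\<^sub>R (l / (1 - w)) + w *\<^sub>R (al / w)) ^ (2*k)
        \<le> (1 - w) * (l / (1 - w)) ^ (2*k) + w * (al / w) ^ (2*k)"
    using convex_onD[OF cv, of w "l / (1 - w)" "al / w"] w by simp
  moreover have "(1 - w) *\<^sub>R (l / (1 - w)) + w *\<^sub>R (al / w) = l + al" using w by simp
  moreover have "(1 - w) * (l / (1 - w)) ^ (2*k) = l ^ (2*k) / (1 - w) ^ (2*k - 1)"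
  proof -
    have kk: "2*k = Suc (2*k - 1)" using k by simp
    have "(1 - w) ^ (2*k) = (1 - w) * (1 - w) ^ (2*k - 1)" by (subst kk) simp
    then show ?thesis using w by (simp add: power_divide)
  qed
  moreover have "w * (al / w) ^ (2*k) = al ^ (2*k) / w ^ (2*k - 1)"
  proof -
    have kk: "2*k = Suc (2*k - 1)" using k by simp
    have "w ^ (2*k) = w * w ^ (2*k - 1)" by (subst kk) simp
    then show ?thesis using w by (simp add: power_divide)
  qed
  ultimately show ?thesis by simp
qed

lemma lb_scalar:
  fixes l al w t :: real
  assumes w: "0 < w" "w < 1" and k: "k \<ge> 1" and al: "al > 0" and t: "t > 0"
    and con: "al ^ (2*k) * (1 - w) ^ (2*k - 1) = t\<^sup>2 * w ^ (2*k - 1)"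
  shows "t\<^sup>2 / al ^ (2*k) * (l + al) ^ (2*k) \<le> (l ^ (2*k) + t\<^sup>2) / w ^ (2*k - 1)"
proof -
  define X where "X = l ^ (2*k)"
  define Al where "Al = al ^ (2*k)"
  define Wv where "Wv = w ^ (2*k - 1)"
  define Wc where "Wc = (1 - w) ^ (2*k - 1)"
  have W: "Wv > 0" "Wc > 0" "Al > 0" unfolding Wv_def Wc_def Al_def using w al by auto
  have con': "Al * Wc = t\<^sup>2 * Wv" using con unfolding Al_def Wc_def Wv_def .
  have cb: "(l + al) ^ (2*k) \<le> X / Wc + Al / Wv"
    using convex_bound[OF w k] unfolding X_def Al_def Wv_def Wc_def .
  have "t\<^sup>2 / Al * (l + al) ^ (2*k) \<le> t\<^sup>2 / Al * (X / Wc + Al / Wv)"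
    using cb W t by (intro mult_left_mono) auto
  also have "\<dots> = (t\<^sup>2 / (Al * Wc)) * X + t\<^sup>2 / Wv"
    using W by (simp add: field_simps)
  also have "t\<^sup>2 / (Al * Wc) = 1 / Wv"
    unfolding con' using W t by simp
  finally have "t\<^sup>2 / Al * (l + al) ^ (2*k) \<le> (X + t\<^sup>2) / Wv" by (simp add: add_divide_distrib)
  then show ?thesis unfolding X_def Al_def Wv_def .
qed

context hs
begin

abbreviation PP :: "real \<Rightarrow> nat \<Rightarrow> real poly" where "PP \<alpha> k \<equiv> [:\<alpha>, 1:] ^ k"

lemma poly_PP: "poly (PP \<alpha> k) l = (l + \<alpha>) ^ k"
  by (simp add: poly_power add.commute)

lemma PP_ge: "\<alpha> > 0 \<Longrightarrow> \<forall>l\<in>{0..a}. \<alpha> ^ k \<le> poly (PP \<alpha> k) l"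
  by (auto simp: poly_PP intro!: power_mono)

lemma Apow_op: "(A ^^ k) x = poly_op (monom 1 k) A x"
  by (simp add: poly_op_monom[OF A_lin])

lemma PA_lin_add: "poly_op p A (x + y) = poly_op p A x + poly_op p A y"
  by (rule poly_op_linear(1)[OF A_lin])

lemma PA_lin_scale: "poly_op p A (r *\<^sub>R x) = r *\<^sub>R poly_op p A x"
  by (rule poly_op_linear(2)[OF A_lin])

lemma PA_lin_diff: "poly_op p A (x - y) = poly_op p A x - poly_op p A y"
  using PA_lin_add[of p x "-y"] PA_lin_scale[of p "-1" y] by simp

lemma UB:
  assumes k: "k \<ge> 1" and al: "\<alpha> > 0"
    and hw: "poly_op (PP \<alpha> k) A w = \<alpha> ^ k *\<^sub>R e"
  shows "norm w \<le> Kfun T (real k) (\<alpha> ^ k) e"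
proof (rule Kfun_ge[OF k])
  fix z
  define c where "c = \<alpha> ^ k"
  have c0: "c > 0" unfolding c_def using al by simp
  define P where "P = PP \<alpha> k"
  define M where "M = (monom 1 k :: real poly)"
  have Pge: "\<forall>l\<in>{0..a}. c \<le> poly P l" unfolding P_def c_def by (rule PP_ge[OF al])
  obtain a' where a': "poly_op P A a' = e - (A ^^ k) z" using PA_surj[OF c0 Pge] by blast
  obtain b' where b': "poly_op P A b' = z" using PA_surj[OF c0 Pge] by blast
  have Mop: "(A ^^ k) x = poly_op M A x" for x unfolding M_def by (rule Apow_op)
  have comm: "poly_op P A (poly_op M A x) = poly_op M A (poly_op P A x)" for x
    by (rule poly_op_comm[OF A_lin])
  have wq: "w = c *\<^sub>R (a' + poly_op M A b')"
  proof (rule PA_inj[OF c0 Pge])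
    show "poly_op P A w = poly_op P A (c *\<^sub>R (a' + poly_op M A b'))"
      unfolding PA_lin_scale PA_lin_add comm a' b' using hw unfolding P_def c_def Mop by simp
  qed
  define D where "D = P * P - [:c\<^sup>2:] - M * M"
  have Dpos: "\<forall>l\<in>{0..a}. 0 \<le> poly D l"
  proof
    fix l assume l: "l \<in> {0..a}"
    have "l ^ k + \<alpha> ^ k \<le> (l + \<alpha>) ^ k" using l al k by (intro pow_add_ge) auto
    then have "(l ^ k + \<alpha> ^ k)\<^sup>2 \<le> ((l + \<alpha>) ^ k)\<^sup>2" using l al by (intro power_mono) auto
    moreover have "(l ^ k)\<^sup>2 + (\<alpha> ^ k)\<^sup>2 \<le> (l ^ k + \<alpha> ^ k)\<^sup>2" using l al
      by (simp add: power2_eq_square algebra_simps)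
    moreover have "poly D l = (l+\<alpha>)^k * (l+\<alpha>)^k - c\<^sup>2 - l^k * l^k"
      unfolding D_def P_def M_def by (simp only: poly_diff poly_mult poly_PP poly_monom) simp
    ultimately show "0 \<le> poly D l" unfolding c_def by (simp add: power2_eq_square)
  qed
  have PPsplit: "(norm (poly_op P A x))\<^sup>2 = inner (poly_op D A x) x + c\<^sup>2 * (norm x)\<^sup>2 + (norm (poly_op M A x))\<^sup>2" for x
  proof -
    have "P * P = D + [:c\<^sup>2:] + M * M" unfolding D_def by simp
    then have "(norm (poly_op P A x))\<^sup>2 = inner (poly_op (D + [:c\<^sup>2:] + M * M) A x) x"
      by (simp add: PA_normsq)
    also have "\<dots> = inner (poly_op D A x) x + c\<^sup>2 * (norm x)\<^sup>2 + (norm (poly_op M A x))\<^sup>2"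
      using PA_normsq[of M x] by (simp add: poly_op_add poly_op_const inner_add_left power2_norm_eq_inner)
    finally show ?thesis .
  qed
  define I1 where "I1 = inner (poly_op D A a') a'"
  define I2 where "I2 = inner (poly_op D A b') b'"
  have I: "I1 \<ge> 0" "I2 \<ge> 0" unfolding I1_def I2_def using Dpos by (auto intro: PA_pos)
  define X where "X = inner a' (poly_op M A b')"
  have X': "inner (poly_op M A a') b' = X" unfolding X_def by (rule PA_sym)
  have w2: "(norm w)\<^sup>2 = c\<^sup>2 * ((norm a')\<^sup>2 + 2 * X + (norm (poly_op M A b'))\<^sup>2)"
    unfolding wq X_def by (simp add: norm_add_sq power_mult_distrib)
  have sq: "0 \<le> (norm (poly_op M A a' - c\<^sup>2 *\<^sub>R b'))\<^sup>2" by simp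
  then have sq': "0 \<le> (norm (poly_op M A a'))\<^sup>2 - 2 * c\<^sup>2 * X + c\<^sup>2 * c\<^sup>2 * (norm b')\<^sup>2"
    unfolding norm_diff_sq using X' by (simp add: power_mult_distrib power2_eq_square mult_ac)
  have c2I2': "0 \<le> I2 * (c * c)" using I(2) by simp
  have "(norm w)\<^sup>2 \<le> (norm (poly_op P A a'))\<^sup>2 + c\<^sup>2 * (norm (poly_op P A b'))\<^sup>2"
    unfolding w2 PPsplit I1_def[symmetric] I2_def[symmetric] using I sq'
    by (simp add: algebra_simps power2_eq_square) (use c2I2' in linarith)
  then have "(norm w)\<^sup>2 \<le> (norm (e - (A ^^ k) z))\<^sup>2 + (\<alpha> ^ k)\<^sup>2 * (norm z)\<^sup>2"
    using a' b' unfolding c_def by simp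
  then show "norm w \<le> sqrt ((norm (e - (A ^^ k) z))\<^sup>2 + (\<alpha> ^ k)\<^sup>2 * (norm z)\<^sup>2)"
    by (rule real_le_rsqrt)
qed

end

lemma sq_pow: "(x::real) ^ k * x ^ k = x ^ (2*k)"
  by (simp only: mult_2 power_add)

context hs
begin

lemma LB:
  assumes k: "k \<ge> 1" and al: "\<alpha> > 0" and t: "t > 0" and w: "0 < w" "w < 1"
    and con: "\<alpha> ^ (2*k) * (1 - w) ^ (2*k - 1) = t\<^sup>2 * w ^ (2*k - 1)"
    and hv: "poly_op (PP \<alpha> k) A v = \<alpha> ^ k *\<^sub>R e"
  shows "Kfun T (real k) t e \<le> norm v / sqrt (w ^ (2*k - 1))"
proof -
  define c where "c = \<alpha> ^ k"
  have c0: "c > 0" unfolding c_def using al by simp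
  define P where "P = PP \<alpha> k"
  define M where "M = (monom 1 k :: real poly)"
  define S where "S = M * M + [:t\<^sup>2:]"
  define Wv where "Wv = w ^ (2*k - 1)"
  have Wv0: "Wv > 0" unfolding Wv_def using w by simp
  have polyS: "poly S l = l ^ (2*k) + t\<^sup>2" for l
    unfolding S_def M_def by (simp add: poly_monom sq_pow)
  have Sge: "\<forall>l\<in>{0..a}. t\<^sup>2 \<le> poly S l" unfolding polyS by simp
  have t2: "t\<^sup>2 > 0" using t by simp
  obtain h where h: "poly_op S A h = v" using PA_surj[OF t2 Sge] by blast
  define z where "z = (1/c) *\<^sub>R poly_op (M * P) A h"
  have ev: "e = (1/c) *\<^sub>R poly_op P A v"
  proof -
    have "poly_op P A v = c *\<^sub>R e" using hv unfolding P_def c_def .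
    then show ?thesis using c0 by simp
  qed
  have Az: "(A ^^ k) z = (1/c) *\<^sub>R poly_op (M * (M * P)) A h"
    unfolding z_def Apow_op M_def[symmetric] PA_lin_scale poly_op_mult[OF A_lin] ..
  have ez: "e - (A ^^ k) z = (t\<^sup>2 / c) *\<^sub>R poly_op P A h"
  proof -
    have "e = (1/c) *\<^sub>R poly_op (P * S) A h" unfolding ev h[symmetric] poly_op_mult[OF A_lin] ..
    moreover have "P * S = M * (M * P) + smult (t\<^sup>2) P" unfolding S_def
      by (simp add: algebra_simps)
    ultimately show ?thesis unfolding Az
      by (simp add: poly_op_add poly_op_smult algebra_simps)
  qed
  define N1 where "N1 = (norm (poly_op P A h))\<^sup>2"
  define N2 where "N2 = (norm (poly_op (M * P) A h))\<^sup>2"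
  have V: "(norm (e - (A ^^ k) z))\<^sup>2 + t\<^sup>2 * (norm z)\<^sup>2 = (t\<^sup>2 / c\<^sup>2) * (t\<^sup>2 * N1 + N2)"
  proof -
    have ne: "(norm (e - (A ^^ k) z))\<^sup>2 = (t\<^sup>2 / c)\<^sup>2 * N1" unfolding ez N1_def
      by (simp only: norm_scaleR power_mult_distrib power2_abs)
    have nz: "(norm z)\<^sup>2 = (1 / c)\<^sup>2 * N2" unfolding z_def N2_def
      by (simp only: norm_scaleR power_mult_distrib power2_abs)
    show ?thesis unfolding ne nz using c0 by (simp add: power2_eq_square field_simps)
  qed
  define p1 where "p1 = smult (t\<^sup>2 / c\<^sup>2) (smult (t\<^sup>2) (P * P) + (M * P) * (M * P))"
  define p2 where "p2 = smult (1 / Wv) (S * S)"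
  have i1: "inner (poly_op p1 A h) h = (t\<^sup>2 / c\<^sup>2) * (t\<^sup>2 * N1 + N2)"
    unfolding p1_def N1_def N2_def
    by (simp add: poly_op_smult poly_op_add inner_add_left PA_normsq)
  have i2: "inner (poly_op p2 A h) h = (norm v)\<^sup>2 / Wv"
    unfolding p2_def h[symmetric] by (simp add: poly_op_smult PA_normsq)
  have mono: "\<forall>l\<in>{0..a}. poly p1 l \<le> poly p2 l"
  proof
    fix l assume l: "l \<in> {0..a}"
    have ls: "t\<^sup>2 / \<alpha> ^ (2*k) * (l + \<alpha>) ^ (2*k) \<le> (l ^ (2*k) + t\<^sup>2) / Wv"
      unfolding Wv_def using lb_scalar[OF w k al t con] .
    have Sl: "poly S l \<ge> 0" unfolding polyS using l by simp
    have pP: "poly P l * poly P l = (l + \<alpha>) ^ (2*k)" unfolding P_def poly_PP by (rule sq_pow)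
    have pM: "poly M l * poly M l = l ^ (2*k)" unfolding M_def by (simp add: poly_monom sq_pow)
    have cc: "c\<^sup>2 = \<alpha> ^ (2*k)" unfolding c_def power2_eq_square by (rule sq_pow)
    have "poly p1 l = t\<^sup>2 / c\<^sup>2 * ((poly P l * poly P l) * (poly M l * poly M l + t\<^sup>2))"
      unfolding p1_def by (simp add: algebra_simps)
    also have "\<dots> = (t\<^sup>2 / \<alpha> ^ (2*k) * (l + \<alpha>) ^ (2*k)) * poly S l"
      unfolding pP pM cc polyS by (simp add: mult.assoc)
    also have "\<dots> \<le> ((l ^ (2*k) + t\<^sup>2) / Wv) * poly S l" using ls Sl by (rule mult_right_mono)
    also have "\<dots> = poly p2 l" unfolding p2_def by (simp add: polyS power2_eq_square)
    finally show "poly p1 l \<le> poly p2 l" .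
  qed
  have "(norm (e - (A ^^ k) z))\<^sup>2 + t\<^sup>2 * (norm z)\<^sup>2 \<le> (norm v)\<^sup>2 / Wv"
    unfolding V i1[symmetric] i2[symmetric] by (rule PA_mono[OF mono])
  then have "sqrt ((norm (e - (A ^^ k) z))\<^sup>2 + t\<^sup>2 * (norm z)\<^sup>2) \<le> sqrt ((norm v)\<^sup>2 / Wv)"
    by (rule real_sqrt_le_mono)
  also have "\<dots> = norm v / sqrt Wv" by (simp add: real_sqrt_divide)
  finally show ?thesis using Kfun_le[OF k, of t e z] unfolding Wv_def by linarith
qed

end

lemma edge0:
  fixes x s m :: real
  assumes h: "\<And>w. 0 < w \<Longrightarrow> w < 1 \<Longrightarrow> x \<le> w powr (-m) * s"
  shows "x \<le> s"
proof -
  have lim: "((\<lambda>w. w powr (-m) * s) \<longlongrightarrow> 1 powr (-m) * s) (at_left 1)"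
    by (intro tendsto_intros) auto
  have ev: "eventually (\<lambda>w. x \<le> w powr (-m) * s) (at_left (1::real))"
  proof -
    have "eventually (\<lambda>w. w \<in> {0<..<1}) (at_left (1::real))" by (rule eventually_at_left_real) simp
    then show ?thesis by eventually_elim (use h in auto)
  qed
  show ?thesis using tendsto_lowerbound[OF lim ev] by simp
qed

lemma edge1:
  fixes x s m :: real
  assumes h: "\<And>w. 0 < w \<Longrightarrow> w < 1 \<Longrightarrow> x \<le> (1 - w) powr (-m) * s"
  shows "x \<le> s"
proof -
  have lim: "((\<lambda>w. (1 - w) powr (-m) * s) \<longlongrightarrow> (1 - 0) powr (-m) * s) (at_right 0)"
    by (intro tendsto_intros) auto
  have ev: "eventually (\<lambda>w. x \<le> (1 - w) powr (-m) * s) (at_right (0::real))"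
  proof -
    have "eventually (\<lambda>w. w \<in> {0<..<1}) (at_right (0::real))" by (rule eventually_at_right_real) simp
    then show ?thesis by eventually_elim (use h in auto)
  qed
  show ?thesis using tendsto_lowerbound[OF lim ev] by simp
qed

lemma alpha_props:
  fixes t w \<theta> :: real and k :: nat
  assumes t: "t > 0" and w: "0 < w" "w < 1" and k: "k \<ge> 1"
    and n_def: "n = 2*k - 1"
    and \<alpha>_def: "\<alpha> = (t\<^sup>2 * (w / (1 - w)) ^ n) powr (1 / real (2*k))"
  shows "\<alpha> > 0" "\<alpha> ^ (2*k) * (1 - w) ^ n = t\<^sup>2 * w ^ n"
    "t powr (-\<theta>) * \<alpha> powr (\<theta> * real k) / sqrt (w ^ n) = (w powr (1 - \<theta>) * (1 - w) powr \<theta>) powr (- (real n / 2))"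
proof -
  define X where "X = t\<^sup>2 * (w / (1 - w)) ^ n"
  have X0: "X > 0" unfolding X_def using t w by simp
  show a0: "\<alpha> > 0" unfolding \<alpha>_def X_def[symmetric] using X0 by simp
  have "\<alpha> ^ (2*k) = \<alpha> powr real (2*k)" using a0 by (rule powr_realpow[symmetric])
  also have "\<dots> = X" unfolding \<alpha>_def X_def[symmetric] using X0 k by (simp add: powr_powr)
  finally have aX: "\<alpha> ^ (2*k) = X" .
  show "\<alpha> ^ (2*k) * (1 - w) ^ n = t\<^sup>2 * w ^ n" unfolding aX X_def using w
    by (simp add: power_divide)
  have rn: "real n = 2 * real k - 1" unfolding n_def using k by (simp add: of_nat_diff)
  have la: "ln \<alpha> = (2 * ln t + real n * (ln w - ln (1 - w))) / (2 * real k)"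
    unfolding \<alpha>_def X_def using t w k
    by (simp add: ln_mult ln_div ln_realpow ln_powr field_simps)
  have L: "ln (t powr (-\<theta>) * \<alpha> powr (\<theta> * real k) / sqrt (w ^ n))
      = -\<theta> * ln t + \<theta> * real k * ln \<alpha> - real n * ln w / 2"
    using t w a0 by (simp add: ln_mult ln_div ln_sqrt ln_realpow)
  have R: "ln ((w powr (1 - \<theta>) * (1 - w) powr \<theta>) powr (- (real n / 2)))
      = - (real n / 2) * ((1 - \<theta>) * ln w + \<theta> * ln (1 - w))"
    using w by (simp add: ln_mult)
  have "ln (t powr (-\<theta>) * \<alpha> powr (\<theta> * real k) / sqrt (w ^ n))
      = ln ((w powr (1 - \<theta>) * (1 - w) powr \<theta>) powr (- (real n / 2)))"
    unfolding L R la using k by (simp add: field_simps)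
  then show "t powr (-\<theta>) * \<alpha> powr (\<theta> * real k) / sqrt (w ^ n) = (w powr (1 - \<theta>) * (1 - w) powr \<theta>) powr (- (real n / 2))"
    using t w a0 by (subst (asm) ln_inj_iff) auto
qed

context hs
begin

lemma Kfun_nonneg: "k \<ge> 1 \<Longrightarrow> 0 \<le> Kfun T (real k) t e"
  by (rule Kfun_ge) auto

lemma LBt:
  assumes k: "k \<ge> 1" and nu: "0 \<le> \<nu>" "\<nu> \<le> real k" and t: "t > 0" and w: "0 < w" "w < 1"
  shows "\<exists>\<alpha>>0. t powr (-(\<nu> / real k)) * Kfun T (real k) t (xd - x0)
     \<le> (w powr (1 - \<nu> / real k) * (1 - w) powr (\<nu> / real k)) powr (- (real (2*k - 1) / 2))
         * (\<alpha> powr (-\<nu>) * norm (xd - tikh T (T xd) x0 \<alpha> k))"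
proof -
  define \<theta> where "\<theta> = \<nu> / real k"
  have nuth: "\<nu> = \<theta> * real k" unfolding \<theta>_def using k by simp
  define n where "n = 2*k - 1"
  define \<alpha> where "\<alpha> = (t\<^sup>2 * (w / (1 - w)) ^ n) powr (1 / real (2*k))"
  note ap = alpha_props(1,2)[OF t w k n_def \<alpha>_def] alpha_props(3)[OF t w k n_def \<alpha>_def, of \<theta>]
  define v where "v = xd - tikh T (T xd) x0 \<alpha> k"
  have hv: "poly_op (PP \<alpha> k) A v = \<alpha> ^ k *\<^sub>R (xd - x0)" unfolding v_def by (rule tikh_err[OF ap(1)])
  have K: "Kfun T (real k) t (xd - x0) \<le> norm v / sqrt (w ^ n)"
    unfolding n_def by (rule LB[OF k ap(1) t w _ hv]) (use ap(2) n_def in simp)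
  have Wn: "sqrt (w ^ n) > 0" using w by simp
  have tp: "t powr (-\<theta>) > 0" using t by simp
  have "t powr (-\<theta>) * Kfun T (real k) t (xd - x0) \<le> t powr (-\<theta>) * (norm v / sqrt (w ^ n))"
    using K tp by (intro mult_left_mono) auto
  also have "\<dots> = (t powr (-\<theta>) * \<alpha> powr \<nu> / sqrt (w ^ n)) * (\<alpha> powr (-\<nu>) * norm v)"
  proof -
    have "\<alpha> powr \<nu> * \<alpha> powr (-\<nu>) = 1" using ap(1) by (simp add: powr_add[symmetric])
    then show ?thesis by (simp add: field_simps)
  qed
  also have "t powr (-\<theta>) * \<alpha> powr \<nu> / sqrt (w ^ n) = (w powr (1 - \<theta>) * (1 - w) powr \<theta>) powr (- (real n / 2))"
    unfolding nuth by (rule ap(3))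
  finally show ?thesis unfolding \<theta>_def n_def v_def using ap(1) by blast
qed

lemma u_mono:
  assumes k: "k \<ge> 1" and al: "0 < \<alpha>" "\<alpha> \<le> \<beta>"
    and ua: "poly_op (PP \<alpha> k) A ua = e" and ub: "poly_op (PP \<beta> k) A ub = e"
  shows "norm ub \<le> norm ua"
proof -
  have be: "\<beta> > 0" using al by simp
  define Q where "Q = PP \<alpha> k * PP \<beta> k"
  have Qge: "\<forall>l\<in>{0..a}. \<alpha> ^ k * \<beta> ^ k \<le> poly Q l"
    unfolding Q_def using PP_ge[OF al(1), of k] PP_ge[OF be, of k] al be
    by (auto intro!: mult_mono simp: poly_PP)
  have c0: "\<alpha> ^ k * \<beta> ^ k > 0" using al be by simp
  obtain g where g: "poly_op Q A g = e" using PA_surj[OF c0 Qge] by blast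
  have ua': "ua = poly_op (PP \<beta> k) A g"
  proof (rule PA_inj[OF _ PP_ge[OF al(1)]])
    show "0 < \<alpha> ^ k" using al by simp
    show "poly_op (PP \<alpha> k) A ua = poly_op (PP \<alpha> k) A (poly_op (PP \<beta> k) A g)"
      unfolding ua poly_op_mult[OF A_lin, symmetric] using g unfolding Q_def by simp
  qed
  have ub': "ub = poly_op (PP \<alpha> k) A g"
  proof (rule PA_inj[OF _ PP_ge[OF be]])
    show "0 < \<beta> ^ k" using be by simp
    show "poly_op (PP \<beta> k) A ub = poly_op (PP \<beta> k) A (poly_op (PP \<alpha> k) A g)"
      unfolding ub poly_op_mult[OF A_lin, symmetric] using g unfolding Q_def by (simp add: mult.commute)
  qed
  have "(norm ub)\<^sup>2 \<le> (norm ua)\<^sup>2"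
    unfolding ua' ub' PA_normsq
  proof (rule PA_mono, intro ballI)
    fix l assume l: "l \<in> {0..a}"
    have "(l + \<alpha>) ^ k \<le> (l + \<beta>) ^ k" using l al by (intro power_mono) auto
    then have "(l + \<alpha>) ^ k * (l + \<alpha>) ^ k \<le> (l + \<beta>) ^ k * (l + \<beta>) ^ k"
      using l al by (intro mult_mono) auto
    then show "poly (PP \<alpha> k * PP \<alpha> k) l \<le> poly (PP \<beta> k * PP \<beta> k) l" by (simp only: poly_mult poly_PP)
  qed
  then show ?thesis by (simp add: power_mono_iff)
qed

end

theorem proposition4:
  fixes T :: "'a::{real_inner,complete_space} \<Rightarrow> 'b::{real_inner,complete_space}"
    and xd x0 :: 'a and k :: nat and \<nu> :: real
  assumes "bounded_linear T" and "inj T" and "T \<noteq> (\<lambda>x. 0)"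
    and "k \<ge> 1" and "0 \<le> \<nu>" and "\<nu> \<le> real k"
  shows "ereal (Nconst (\<nu> / real k) powr (1 - 2 * real k)) * interp_norm T \<nu> (real k) (xd - x0)
           \<le> (SUP \<alpha>\<in>{0<..}. ereal (\<alpha> powr (-\<nu>) * norm (xd - tikh T (T xd) x0 \<alpha> k)))
       \<and> (SUP \<alpha>\<in>{0<..}. ereal (\<alpha> powr (-\<nu>) * norm (xd - tikh T (T xd) x0 \<alpha> k)))
           \<le> interp_norm T \<nu> (real k) (xd - x0)
       \<and> (\<nu> = real k \<longrightarrow> (\<exists>L.
            ((\<lambda>\<alpha>. ereal (\<alpha> powr (-\<nu>) * norm (xd - tikh T (T xd) x0 \<alpha> k))) \<longlongrightarrow> L) (at_right 0)
          \<and> ereal (Nconst (\<nu> / real k) powr (1 - 2 * real k)) * interp_norm T \<nu> (real k) (xd - x0) \<le> L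
          \<and> L \<le> interp_norm T \<nu> (real k) (xd - x0)))"
proof -
  interpret H: hs T by (rule hs.intro[OF assms(1,2)])
  have k: "k \<ge> 1" by fact
  have kpos: "real k > 0" using k by simp
  define \<theta> where "\<theta> = \<nu> / real k"
  have th: "0 \<le> \<theta>" "\<theta> \<le> 1" unfolding \<theta>_def using assms(5,6) kpos by auto
  define f where "f = (\<lambda>\<alpha>. \<alpha> powr (-\<nu>) * norm (xd - tikh T (T xd) x0 \<alpha> k))"
  define S where "S = (SUP \<alpha>\<in>{0<..}. ereal (f \<alpha>))"
  define g where "g = (\<lambda>t. t powr (-\<nu> / real k) * Kfun T (real k) t (xd - x0))"
  define I where "I = interp_norm T \<nu> (real k) (xd - x0)"
  have I_eq: "I = (SUP t\<in>{0<..}. ereal (g t))" unfolding I_def interp_norm_def g_def ..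
  define c0 where "c0 = Nconst (\<nu> / real k) powr (1 - 2 * real k)"
  have fS: "ereal (f \<alpha>) \<le> S" if "\<alpha> > 0" for \<alpha> unfolding S_def using that by (intro SUP_upper) auto
  have f0: "f \<alpha> \<ge> 0" for \<alpha> unfolding f_def by simp
  have g0: "g t \<ge> 0" for t unfolding g_def using H.Kfun_nonneg[OF k] by simp
  have P2: "S \<le> I"
    unfolding S_def
  proof (rule SUP_least)
    fix \<alpha> :: real assume "\<alpha> \<in> {0<..}"
    then have al: "\<alpha> > 0" by simp
    have hv: "poly_op (H.PP \<alpha> k) H.A (xd - tikh T (T xd) x0 \<alpha> k) = \<alpha> ^ k *\<^sub>R (xd - x0)"
      by (rule H.tikh_err[OF al])
    have ub: "norm (xd - tikh T (T xd) x0 \<alpha> k) \<le> Kfun T (real k) (\<alpha> ^ k) (xd - x0)"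
      by (rule H.UB[OF k al hv])
    have pw: "(\<alpha> ^ k) powr (-\<nu> / real k) = \<alpha> powr (-\<nu>)"
    proof -
      have "(\<alpha> ^ k) powr (-\<nu> / real k) = (\<alpha> powr real k) powr (-\<nu> / real k)" using al by (simp add: powr_realpow)
      also have "\<dots> = \<alpha> powr (-\<nu>)" using kpos by (simp add: powr_powr)
      finally show ?thesis .
    qed
    have "f \<alpha> \<le> g (\<alpha> ^ k)" unfolding f_def g_def pw using ub by (intro mult_left_mono) auto
    moreover have "ereal (g (\<alpha> ^ k)) \<le> I" unfolding I_eq using al by (intro SUP_upper) auto
    ultimately show "ereal (f \<alpha>) \<le> I" by (meson ereal_less_eq(3) order_trans)
  qed
  have Sfin: "S \<noteq> -\<infinity>" using fS[of 1] by auto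
  have c0pos: "c0 > 0"
  proof -
    have "Nconst (\<nu> / real k) > 0" unfolding Nconst_def using k by auto
    then show ?thesis unfolding c0_def by simp
  qed
  have gt: "c0 * g t \<le> S" if t: "t > 0" for t
  proof (cases S)
    case PInf then show ?thesis by simp
  next
    case MInf then show ?thesis using Sfin by simp
  next
    case (real s)
    define n where "n = 2*k - 1"
    have rn: "real n = 2 * real k - 1" unfolding n_def using k by (simp add: of_nat_diff)
    define G where "G = (\<lambda>w::real. (w powr (1 - \<theta>) * (1 - w) powr \<theta>) powr (- (real n / 2)))"
    have bound: "g t \<le> G w * s" if w: "0 < w" "w < 1" for w
    proof -
      obtain \<alpha> where al: "\<alpha> > 0" and le: "t powr (-(\<nu> / real k)) * Kfun T (real k) t (xd - x0) \<le> G w * f \<alpha>"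
        using H.LBt[OF k assms(5,6) t w] unfolding G_def \<theta>_def n_def f_def by blast
      have "f \<alpha> \<le> s" using fS[OF al] real by simp
      then have "G w * f \<alpha> \<le> G w * s" unfolding G_def by (intro mult_left_mono) auto
      then show ?thesis using le unfolding g_def minus_divide_left[symmetric] by linarith
    qed
    consider "\<theta> = 0" | "\<theta> = 1" | "0 < \<theta> \<and> \<theta> < 1" using th by linarith
    then show ?thesis
    proof cases
      case 1
      then have c1: "c0 = 1" unfolding c0_def Nconst_def \<theta>_def[symmetric] by simp
      have "g t \<le> s"
      proof (rule edge0[where m = "real n / 2"])
        fix w :: real assume w: "0 < w" "w < 1"
        show "g t \<le> w powr (- (real n / 2)) * s" using bound[OF w] w unfolding G_def 1 by simp
      qed
      then show ?thesis using real c1 by simp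
    next
      case 2
      then have c1: "c0 = 1" unfolding c0_def Nconst_def \<theta>_def[symmetric] by simp
      have "g t \<le> s"
      proof (rule edge1[where m = "real n / 2"])
        fix w :: real assume w: "0 < w" "w < 1"
        show "g t \<le> (1 - w) powr (- (real n / 2)) * s" using bound[OF w] w unfolding G_def 2 by simp
      qed
      then show ?thesis using real c1 by simp
    next
      case 3
      define B where "B = \<theta> powr \<theta> * (1 - \<theta>) powr (1 - \<theta>)"
      have B0: "B > 0" unfolding B_def using 3 by simp
      have cB: "c0 = B powr (real n / 2)"
      proof -
        have "c0 = (B powr (-1/2)) powr (1 - 2 * real k)"
          unfolding c0_def Nconst_def \<theta>_def[symmetric] B_def using 3 by simp
        also have "\<dots> = B powr ((-1/2) * (1 - 2 * real k))" by (rule powr_powr)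
        also have "(-1/2) * (1 - 2 * real k) = real n / 2" unfolding rn by (simp add: algebra_simps)
        finally show ?thesis .
      qed
      have GB: "G (1 - \<theta>) = B powr (- (real n / 2))" unfolding G_def B_def by (simp add: mult.commute)
      have "g t \<le> G (1 - \<theta>) * s" using bound 3 by simp
      then have "c0 * g t \<le> c0 * (G (1 - \<theta>) * s)" using c0pos by (intro mult_left_mono) auto
      also have "\<dots> = s" unfolding cB GB using B0 by (simp add: powr_add[symmetric])
      finally show ?thesis using real by simp
    qed
  qed
  have P1: "ereal c0 * I \<le> S"
  proof -
    have "ereal c0 * I = (SUP t\<in>{0<..}. ereal c0 * ereal (g t))"
      unfolding I_eq using c0pos g0 by (subst SUP_ereal_mult_left) auto
    also have "\<dots> \<le> S" using gt by (intro SUP_least) auto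
    finally show ?thesis .
  qed
  have P3: "((\<lambda>\<alpha>. ereal (f \<alpha>)) \<longlongrightarrow> S) (at_right 0)" if nk: "\<nu> = real k"
  proof -
    have u: "poly_op (H.PP \<alpha> k) H.A ((\<alpha> powr (-\<nu>)) *\<^sub>R (xd - tikh T (T xd) x0 \<alpha> k)) = xd - x0"
      if al: "\<alpha> > 0" for \<alpha>
    proof -
      have "\<alpha> powr (-\<nu>) * \<alpha> ^ k = 1"
        using al unfolding nk by (simp add: powr_realpow[symmetric] powr_add[symmetric])
      then show ?thesis using H.tikh_err[OF al] by (simp add: H.PA_lin_scale)
    qed
    have anti: "f \<beta> \<le> f \<alpha>" if "0 < \<alpha>" "\<alpha> \<le> \<beta>" for \<alpha> \<beta>
    proof -
      have "norm ((\<beta> powr (-\<nu>)) *\<^sub>R (xd - tikh T (T xd) x0 \<beta> k))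
          \<le> norm ((\<alpha> powr (-\<nu>)) *\<^sub>R (xd - tikh T (T xd) x0 \<alpha> k))"
        using that by (intro H.u_mono[OF k that u u]) auto
      then show ?thesis unfolding f_def by simp
    qed
    show ?thesis
    proof (rule order_tendstoI)
      fix y assume "y < S"
      then obtain \<alpha>0 where a0: "\<alpha>0 > 0" and y: "y < ereal (f \<alpha>0)" unfolding S_def
        by (auto simp: less_SUP_iff)
      have "eventually (\<lambda>\<alpha>. \<alpha> \<in> {0<..<\<alpha>0}) (at_right (0::real))"
        by (rule eventually_at_right_real) (use a0 in simp)
      then show "eventually (\<lambda>\<alpha>. y < ereal (f \<alpha>)) (at_right 0)"
      proof eventually_elim
        case (elim \<alpha>)
        then have "f \<alpha>0 \<le> f \<alpha>" using anti[of \<alpha> \<alpha>0] by simp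
        then show ?case using y by (meson ereal_less_eq(3) less_le_trans)
      qed
    next
      fix y assume yS: "S < y"
      show "eventually (\<lambda>\<alpha>. ereal (f \<alpha>) < y) (at_right 0)"
        using eventually_at_right_less[of "0::real"]
        by eventually_elim (use fS yS in \<open>meson le_less_trans\<close>)
    qed
  qed
  show ?thesis
    using P1 P2 P3 unfolding f_def S_def I_def c0_def by blast
qed

end
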